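(* For every $t\ge 0$, every $k\ge 1$ and every collection $\Omega$ of functions: (1) $\rho_0\bigl(\mathsf{gcr}^{(t)}\bigr)=\rho_0\bigl(\mathsf{TL}_2^{(t+1)}(\Omega)\bigr)=\rho_0\bigl(\mathsf{gwl}_1^{(t)}\bigr)$; (2) $\rho_0\bigl(\mathsf{gwl}_k^{(\infty)}\bigr)=\rho_0\bigl(\mathsf{TL}_{k+1}(\Omega)\bigr)$.
   Context: Fix integers $n\ge 1$ and $\ell\ge 1$. A graph is a triple $G=(V_G,E_G,\mathrm{col}_G)$ with $V_G=[n]=\{1,\dots,n\}$, $E_G$ a set of unordered pairs of distinct vertices (undirected, no loops), and a vertex labelling $\mathrm{col}_G:V_G\to\mathbb R^\ell$; $N_G(v)=\{u:uv\in E_G\}$. Let $\mathcal G$ be the set of all such graphs. Tensor language $\mathsf{TL}(\Omega)$: let $\Omega$ be a collection of functions, each of the form $f:\mathbb R^p\to\mathbb R$ for some $p\ge1$ depending on $f$. Expressions are generated by $\varphi::=\mathbf 1_{x=y}\mid \mathbf 1_{x\neq y}\mid E(x,y)\mid P_s(x)\mid \varphi\cdot\varphi\mid \varphi+\varphi\mid a\cdot\varphi\mid f(\varphi_1,\dots,\varphi_p)\mid \sum_x\varphi$, with $x,y$ index variables, $s\in[\ell]$, $a\in\mathbb R$, $f\in\Omega$ of arity $p$. Free variables: $\mathrm{free}(\mathbf 1_{x\,\mathrm{op}\,y})=\mathrm{free}(E(x,y))=\{x,y\}$, $\mathrm{free}(P_s(x))=\{x\}$; union of the components' free variables for $\cdot$,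 $+$, $f(\dots)$; $\mathrm{free}(a\cdot\varphi)=\mathrm{free}(\varphi)$; $\mathrm{free}(\sum_x\varphi)=\mathrm{free}(\varphi)\setminus\{x\}$. Semantics: for a graph $G$ and a valuation $\nu$ mapping variables to $V_G$: $[\![E(x,y)]\!]^\nu_G=1$ if $\nu(x)\nu(y)\in E_G$ and $0$ otherwise; $[\![P_s(x)]\!]^\nu_G=\mathrm{col}_G(\nu(x))_s$; $[\![\mathbf 1_{x\,\mathrm{op}\,y}]\!]^\nu_G=1$ if $\nu(x)\,\mathrm{op}\,\nu(y)$ and $0$ otherwise; $\cdot$, $+$, scalar multiplication and $f$ act on values; $[\![\sum_x\varphi]\!]^\nu_G=\sum_{v\in V_G}[\![\varphi]\!]^{\nu[x\mapsto v]}_G$. Summation depth $\mathrm{sd}$: $0$ for atoms, maximum over the components for $\cdot$, $+$, $f(\dots)$, $\mathrm{sd}(a\cdot\varphi)=\mathrm{sd}(\varphi)$, $\mathrm{sd}(\sum_x\varphi)=\mathrm{sd}(\varphi)+1$. $\mathsf{TL}_k(\Omega)$ is the set of expressions in which only variables from $\{x_1,\dots,x_k\}$ occur (free or bound; variables may be re-bound), and $\mathsf{TL}_k^{(t)}(\Omega)$ its subset of summation depth at most $t$. For a set $\mathcal L$ of expressions, $\rho_0(\mathcal L)$ is the set of pairs of graphs $(G,H)$ with $[\![\varphi]\!]_G=[\![\varphi]\!]_H$ for all closed (no free variables) $\varphi\in\mathcal L$. Color refinement: $\mathsf{cr}^{(0)}(G,v)=\mathrm{col}_G(v)$, $\mathsf{cr}^{(t+1)}(G,v)=\bigl(\mathsf{cr}^{(t)}(G,v),\{\!\{\mathsf{cr}^{(t)}(G,u):u\in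 N_G(v)\}\!\}\bigr)$, and $\mathsf{gcr}^{(t)}(G)=\{\!\{\mathsf{cr}^{(t)}(G,v):v\in V_G\}\!\}$ (multisets; labels compared as formal objects across graphs). $k$-dimensional Weisfeiler–Leman ($k\ge1$): for $\mathbf v\in V_G^k$, $\mathsf{atp}_k(G,\mathbf v)$ records, for all $1\le i<j\le k$, whether $v_i=v_j$ and whether $v_iv_j\in E_G$, together with $\mathrm{col}_G(v_i)$ for all $i$. $\mathsf{wl}_k^{(0)}(G,\mathbf v)=\mathsf{atp}_k(G,\mathbf v)$, $\mathsf{wl}_k^{(t+1)}(G,\mathbf v)=\bigl(\mathsf{wl}_k^{(t)}(G,\mathbf v),\{\!\{(\mathsf{atp}_{k+1}(G,(v_1,\dots,v_k,u)),\mathsf{wl}_k^{(t)}(G,\mathbf v[u/1]),\dots,\mathsf{wl}_k^{(t)}(G,\mathbf v[u/k])):u\in V_G\}\!\}\bigr)$, where $\mathbf v[u/i]$ replaces the $i$-th entry by $u$. $\mathsf{gwl}_k^{(t)}(G)=\{\!\{\mathsf{wl}_k^{(t)}(G,\mathbf v):\mathbf v\in V_G^k\}\!\}$. $\rho_0(\mathsf{gcr}^{(t)})=\{(G,H):\mathsf{gcr}^{(t)}(G)=\mathsf{gcr}^{(t)}(H)\}$, $\rho_0(\mathsf{gwl}_k^{(t)})=\{(G,H):\mathsf{gwl}_k^{(t)}(G)=\mathsf{gwl}_k^{(t)}(H)\}$, and $\rho_0(\mathsf{gwl}_k^{(\infty)})=\bigcap_{t\ge0}\rho_0(\mathsf{gwl}_k^{(t)})$.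 *)

theory Defs
  imports Complex_Main "HOL-Library.Multiset"
begin

text \<open>A graph is a pair (E, col): E is a set of 2-element subsets of {1..n}
  (undirected edges, no loops), col v s is the s-th coordinate of the label of v.
  Labels are stored canonically: col v s = 0 whenever v is not a vertex or s is not
  in {1..l}, so that (E, col) corresponds bijectively to the paper's graphs.\<close>

type_synonym graph = "nat set set \<times> (nat \<Rightarrow> nat \<Rightarrow> real)"

definition graphs :: "nat \<Rightarrow> nat \<Rightarrow> graph set" where
  "graphs n l = {(E, col).
      E \<subseteq> {{u, v} | u v. u \<in> {1..n} \<and> v \<in> {1..n} \<and> u \<noteq> v} \<and>
      (\<forall>v s. (v \<notin> {1..n} \<or> s \<notin> {1..l}) \<longrightarrow> col v s = 0)}"

definition edges :: "graph \<Rightarrow> nat set set" where "edges G = fst G"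
definition col :: "graph \<Rightarrow> nat \<Rightarrow> nat \<Rightarrow> real" where "col G = snd G"

definition nbrs :: "nat \<Rightarrow> graph \<Rightarrow> nat \<Rightarrow> nat set" where
  "nbrs n G v = {u \<in> {1..n}. {u, v} \<in> edges G}"

text \<open>Index variables are natural numbers (variable x_i is i). A function symbol is a
  pair (p, f) of an arity p and a function f on real vectors of length p
  (represented as real lists).\<close>

type_synonym fsym = "nat \<times> (real list \<Rightarrow> real)"

datatype tl =
    EqI nat nat
  | NeqI nat nat
  | EdgeA nat nat
  | Lab nat nat     \<comment> \<open>Lab s x = P_s(x)\<close>
  | Mul tl tl
  | Add tl tl
  | Scal real tl
  | App fsym "tl list"
  | Sum nat tl

primrec vars :: "tl \<Rightarrow> nat set" where
  "vars (EqI x y) = {x, y}"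
| "vars (NeqI x y) = {x, y}"
| "vars (EdgeA x y) = {x, y}"
| "vars (Lab s x) = {x}"
| "vars (Mul a b) = vars a \<union> vars b"
| "vars (Add a b) = vars a \<union> vars b"
| "vars (Scal c a) = vars a"
| "vars (App f as) = \<Union> (set (map vars as))"
| "vars (Sum x a) = insert x (vars a)"

primrec free :: "tl \<Rightarrow> nat set" where
  "free (EqI x y) = {x, y}"
| "free (NeqI x y) = {x, y}"
| "free (EdgeA x y) = {x, y}"
| "free (Lab s x) = {x}"
| "free (Mul a b) = free a \<union> free b"
| "free (Add a b) = free a \<union> free b"
| "free (Scal c a) = free a"
| "free (App f as) = \<Union> (set (map free as))"
| "free (Sum x a) = free a - {x}"

primrec sd :: "tl \<Rightarrow> nat" where
  "sd (EqI x y) = 0"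
| "sd (NeqI x y) = 0"
| "sd (EdgeA x y) = 0"
| "sd (Lab s x) = 0"
| "sd (Mul a b) = max (sd a) (sd b)"
| "sd (Add a b) = max (sd a) (sd b)"
| "sd (Scal c a) = sd a"
| "sd (App f as) = fold max (map sd as) 0"
| "sd (Sum x a) = Suc (sd a)"

primrec wf :: "fsym set \<Rightarrow> nat \<Rightarrow> tl \<Rightarrow> bool" where
  "wf \<Omega> l (EqI x y) = True"
| "wf \<Omega> l (NeqI x y) = True"
| "wf \<Omega> l (EdgeA x y) = True"
| "wf \<Omega> l (Lab s x) = (s \<in> {1..l})"
| "wf \<Omega> l (Mul a b) = (wf \<Omega> l a \<and> wf \<Omega> l b)"
| "wf \<Omega> l (Add a b) = (wf \<Omega> l a \<and> wf \<Omega> l b)"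
| "wf \<Omega> l (Scal c a) = wf \<Omega> l a"
| "wf \<Omega> l (App f as) = (f \<in> \<Omega> \<and> length as = fst f \<and> list_all (wf \<Omega> l) as)"
| "wf \<Omega> l (Sum x a) = wf \<Omega> l a"

primrec sem :: "nat \<Rightarrow> graph \<Rightarrow> (nat \<Rightarrow> nat) \<Rightarrow> tl \<Rightarrow> real" where
  "sem n G \<nu> (EqI x y) = (if \<nu> x = \<nu> y then 1 else 0)"
| "sem n G \<nu> (NeqI x y) = (if \<nu> x \<noteq> \<nu> y then 1 else 0)"
| "sem n G \<nu> (EdgeA x y) = (if {\<nu> x, \<nu> y} \<in> edges G then 1 else 0)"
| "sem n G \<nu> (Lab s x) = col G (\<nu> x) s"
| "sem n G \<nu> (Mul a b) = sem n G \<nu> a * sem n G \<nu> b"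
| "sem n G \<nu> (Add a b) = sem n G \<nu> a + sem n G \<nu> b"
| "sem n G \<nu> (Scal c a) = c * sem n G \<nu> a"
| "sem n G \<nu> (App f as) = snd f (map (sem n G \<nu>) as)"
| "sem n G \<nu> (Sum x a) = (\<Sum>v\<in>{1..n}. sem n G (\<nu>(x := v)) a)"

definition TL :: "fsym set \<Rightarrow> nat \<Rightarrow> nat \<Rightarrow> tl set" where
  "TL \<Omega> l k = {\<phi>. wf \<Omega> l \<phi> \<and> vars \<phi> \<subseteq> {1..k}}"

definition TLd :: "fsym set \<Rightarrow> nat \<Rightarrow> nat \<Rightarrow> nat \<Rightarrow> tl set" where
  "TLd \<Omega> l k t = {\<phi> \<in> TL \<Omega> l k. sd \<phi> \<le> t}"

text \<open>Value of a closed expression (the valuation is irrelevant for closed expressions).\<close>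
definition closed_val :: "nat \<Rightarrow> graph \<Rightarrow> tl \<Rightarrow> real" where
  "closed_val n G \<phi> = sem n G (\<lambda>_. 1) \<phi>"

definition rho0_TL :: "nat \<Rightarrow> nat \<Rightarrow> tl set \<Rightarrow> (graph \<times> graph) set" where
  "rho0_TL n l L = {(G, H). G \<in> graphs n l \<and> H \<in> graphs n l \<and>
      (\<forall>\<phi>\<in>L. free \<phi> = {} \<longrightarrow> closed_val n G \<phi> = closed_val n H \<phi>)}"

datatype crcol = CInit "nat \<Rightarrow> real" | CRef crcol "crcol multiset"

primrec cr :: "nat \<Rightarrow> graph \<Rightarrow> nat \<Rightarrow> nat \<Rightarrow> crcol" where
  "cr n G 0 v = CInit (col G v)"
| "cr n G (Suc t) v = CRef (cr n G t v) (image_mset (cr n G t) (mset_set (nbrs n G v)))"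

definition gcr :: "nat \<Rightarrow> graph \<Rightarrow> nat \<Rightarrow> crcol multiset" where
  "gcr n G t = image_mset (cr n G t) (mset_set {1..n})"

definition rho0_gcr :: "nat \<Rightarrow> nat \<Rightarrow> nat \<Rightarrow> (graph \<times> graph) set" where
  "rho0_gcr n l t = {(G, H). G \<in> graphs n l \<and> H \<in> graphs n l \<and> gcr n G t = gcr n H t}"

text \<open>k-tuples of vertices are lists of length k (list position i-1 holds v_i).\<close>
type_synonym atype = "(bool \<times> bool) list \<times> (nat \<Rightarrow> real) list"

definition atp :: "graph \<Rightarrow> nat list \<Rightarrow> atype" where
  "atp G vs = ([(vs ! i = vs ! j, {vs ! i, vs ! j} \<in> edges G).
                  i \<leftarrow> [0..<length vs], j \<leftarrow> [0..<length vs], i < j],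
               map (col G) vs)"

datatype wlcol = WInit atype | WRef wlcol "(atype \<times> wlcol list) multiset"

primrec wl :: "nat \<Rightarrow> graph \<Rightarrow> nat \<Rightarrow> nat list \<Rightarrow> wlcol" where
  "wl n G 0 vs = WInit (atp G vs)"
| "wl n G (Suc t) vs = WRef (wl n G t vs)
     (image_mset (\<lambda>u. (atp G (vs @ [u]), map (\<lambda>i. wl n G t (vs[i := u])) [0..<length vs]))
        (mset_set {1..n}))"

definition tuples :: "nat \<Rightarrow> nat \<Rightarrow> nat list set" where
  "tuples n k = {vs. length vs = k \<and> set vs \<subseteq> {1..n}}"

definition gwl :: "nat \<Rightarrow> graph \<Rightarrow> nat \<Rightarrow> nat \<Rightarrow> wlcol multiset" where
  "gwl n G k t = image_mset (wl n G t) (mset_set (tuples n k))"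

definition rho0_gwl :: "nat \<Rightarrow> nat \<Rightarrow> nat \<Rightarrow> nat \<Rightarrow> (graph \<times> graph) set" where
  "rho0_gwl n l k t = {(G, H). G \<in> graphs n l \<and> H \<in> graphs n l \<and> gwl n G k t = gwl n H k t}"

definition rho0_gwl_inf :: "nat \<Rightarrow> nat \<Rightarrow> nat \<Rightarrow> (graph \<times> graph) set" where
  "rho0_gwl_inf n l k = (\<Inter>t. rho0_gwl n l k t)"

end

theory Submission
  imports Defs
begin


lemma sem_free: "(\<forall>x\<in>free \<phi>. \<nu> x = \<mu> x) \<Longrightarrow> sem n G \<nu> \<phi> = sem n G \<mu> \<phi>"
proof (induction \<phi> arbitrary: \<nu> \<mu>)
  case (Mul a b)
  from Mul.prems have "\<forall>x\<in>free a. \<nu> x = \<mu> x" "\<forall>x\<in>free b. \<nu> x = \<mu> x" by auto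
  then have "sem n G \<nu> a = sem n G \<mu> a" "sem n G \<nu> b = sem n G \<mu> b"
    using Mul.IH by blast+
  then show ?case by simp
next
  case (Add a b)
  from Add.prems have "\<forall>x\<in>free a. \<nu> x = \<mu> x" "\<forall>x\<in>free b. \<nu> x = \<mu> x" by auto
  then have "sem n G \<nu> a = sem n G \<mu> a" "sem n G \<nu> b = sem n G \<mu> b"
    using Add.IH by blast+
  then show ?case by simp
next
  case (App f as)
  then show ?case by (auto intro!: arg_cong[where f="snd f"] map_cong)
next
  case (Sum x a)
  then show ?case by (auto intro!: sum.cong)
qed auto

definition sw :: "nat \<Rightarrow> nat \<Rightarrow> nat \<Rightarrow> nat" where
  "sw a b x = (if x = a then b else if x = b then a else x)"

lemma inj_sw: "inj (sw a b)"
  unfolding inj_def sw_def by auto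

primrec ren :: "(nat \<Rightarrow> nat) \<Rightarrow> tl \<Rightarrow> tl" where
  "ren r (EqI x y) = EqI (r x) (r y)"
| "ren r (NeqI x y) = NeqI (r x) (r y)"
| "ren r (EdgeA x y) = EdgeA (r x) (r y)"
| "ren r (Lab s x) = Lab s (r x)"
| "ren r (Mul a b) = Mul (ren r a) (ren r b)"
| "ren r (Add a b) = Add (ren r a) (ren r b)"
| "ren r (Scal c a) = Scal c (ren r a)"
| "ren r (App f as) = App f (map (ren r) as)"
| "ren r (Sum x a) = Sum (r x) (ren r a)"

lemma sem_ren: "inj r \<Longrightarrow> sem n G \<nu> (ren r \<phi>) = sem n G (\<nu> \<circ> r) \<phi>"
proof (induction \<phi> arbitrary: \<nu>)
  case (App f as)
  then show ?case by (auto intro!: arg_cong[where f="snd f"])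
next
  case (Sum x a)
  have eq: "\<And>v. (\<nu>(r x := v)) \<circ> r = (\<nu> \<circ> r)(x := v)"
    using Sum.prems by (auto simp: fun_eq_iff inj_def)
  have "sem n G (\<nu>(r x := v)) (ren r a) = sem n G ((\<nu> \<circ> r)(x := v)) a" for v
    using Sum.IH[OF Sum.prems, of "\<nu>(r x := v)"] eq[of v] by (simp only:)
  then show ?case by (simp add: comp_def)
qed auto

lemma vars_ren: "vars (ren r \<phi>) = r ` vars \<phi>"
  by (induction \<phi>) auto

lemma free_ren: "inj r \<Longrightarrow> free (ren r \<phi>) = r ` free \<phi>"
proof (induction \<phi>)
  case (Sum x a)
  then show ?case by (auto simp: inj_def)
qed auto

lemma fold_max_ge: "(m::nat) \<le> fold max xs m"
  by (induction xs arbitrary: m) (auto, meson le_trans max.cobounded2)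

lemma fold_max_mem: "x \<in> set xs \<Longrightarrow> (x::nat) \<le> fold max xs m"
  apply (induction xs arbitrary: m)
   apply auto
  by (meson fold_max_ge le_trans max.cobounded1)

lemma fold_max_le: "(\<forall>x\<in>set xs. x \<le> t) \<Longrightarrow> (m::nat) \<le> t \<Longrightarrow> fold max xs m \<le> t"
  by (induction xs arbitrary: m) auto

lemma sd_ren: "sd (ren r \<phi>) = sd \<phi>"
proof (induction \<phi>)
  case (App f as)
  then have "map (sd \<circ> ren r) as = map sd as" by auto
  then show ?case by (simp only: sd.simps ren.simps map_map)
qed auto

lemma wf_ren: "wf \<Omega> l (ren r \<phi>) = wf \<Omega> l \<phi>"
  by (induction \<phi>) (auto simp: list_all_iff)



lemma mset_transfer_lemma:
  assumes eq: "image_mset f A = image_mset g B"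
    and h: "\<And>a b. a \<in># A \<Longrightarrow> b \<in># B \<Longrightarrow> f a = g b \<Longrightarrow> F a = H b"
  shows "image_mset F A = image_mset H B"
proof -
  define hh where "hh c = (SOME z. \<exists>a. a \<in># A \<and> f a = c \<and> z = F a)" for c
  have 1: "hh (f a) = F a" if "a \<in># A" for a
  proof -
    have "f a \<in># image_mset g B" using that eq[symmetric] by (metis image_eqI set_image_mset)
    then obtain b where b: "b \<in># B" "g b = f a" by auto
    have "\<exists>z a'. a' \<in># A \<and> f a' = f a \<and> z = F a'" using that by auto
    then have "\<exists>a'. a' \<in># A \<and> f a' = f a \<and> hh (f a) = F a'"
      unfolding hh_def by (rule someI_ex[where P="\<lambda>z. \<exists>a'. a' \<in># A \<and> f a' = f a \<and> z = F a'"]) 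
    then obtain a' where "a' \<in># A" "f a' = f a" "hh (f a) = F a'" by blast
    then show ?thesis using h[OF _ b(1)] b(2) h[OF that b(1)] by metis
  qed
  have 2: "hh (g b) = H b" if "b \<in># B" for b
  proof -
    have "g b \<in># image_mset f A" using that eq by (metis image_eqI set_image_mset)
    then obtain a where a: "a \<in># A" "f a = g b" by auto
    have "\<exists>z a'. a' \<in># A \<and> f a' = g b \<and> z = F a'" using a by auto
    then have "\<exists>a'. a' \<in># A \<and> f a' = g b \<and> hh (g b) = F a'"
      unfolding hh_def by (rule someI_ex[where P="\<lambda>z. \<exists>a'. a' \<in># A \<and> f a' = g b \<and> z = F a'"]) 
    then obtain a' where "a' \<in># A" "f a' = g b" "hh (g b) = F a'" by blast
    then show ?thesis using h[OF _ that] by metis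
  qed
  have "image_mset F A = image_mset (hh \<circ> f) A" using 1 by (auto intro!: image_mset_cong)
  also have "\<dots> = image_mset hh (image_mset f A)" by (rule multiset.map_comp[symmetric])
  also have "\<dots> = image_mset hh (image_mset g B)" using eq by simp
  also have "\<dots> = image_mset (hh \<circ> g) B" by (rule multiset.map_comp)
  also have "\<dots> = image_mset H B" using 2 by (auto intro!: image_mset_cong)
  finally show ?thesis .
qed

lemma sum_eq_via_mset:
  assumes "finite A" "finite B" "image_mset f (mset_set A) = image_mset g (mset_set B)"
    and "\<And>a b. a \<in> A \<Longrightarrow> b \<in> B \<Longrightarrow> f a = g b \<Longrightarrow> F a = H b"
  shows "(\<Sum>a\<in>A. F a) = (\<Sum>b\<in>B. (H b :: real))"
proof -
  have "image_mset F (mset_set A) = image_mset H (mset_set B)"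
    by (rule mset_transfer_lemma[OF assms(3)]) (use assms in auto)
  then show ?thesis by (simp add: sum_unfold_sum_mset)
qed

lemma count_image_mset_set:
  assumes "finite A"
  shows "count (image_mset f (mset_set A)) c = card {a\<in>A. f a = c}"
proof -
  have "count (image_mset f (mset_set A)) c = (\<Sum>x | x \<in># mset_set A \<and> c = f x. count (mset_set A) x)"
    by (rule count_image_mset')
  also have "\<dots> = (\<Sum>x | x \<in> A \<and> c = f x. 1)"
    using assms by (intro sum.cong) auto
  also have "\<dots> = card {a\<in>A. f a = c}" by (simp add: eq_commute)
  finally show ?thesis .
qed

lemma sum_of_bool_count:
  assumes "finite A"
  shows "(\<Sum>a\<in>A. (of_bool (f a = c) :: real)) = real (count (image_mset f (mset_set A)) c)"
  using assms by (simp add: count_image_mset_set Int_def conj_commute)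

lemma count_image_mset_set_le:
  assumes "finite A"
  shows "count (image_mset f (mset_set A)) c \<le> card A"
  using assms by (simp add: count_image_mset_set card_mono)

fun crp :: "crcol \<Rightarrow> crcol" where
  "crp (CInit f) = CInit f" | "crp (CRef c M) = c"

lemma cr_trunc: "cr n G s v = (crp ^^ j) (cr n G (s + j) v)"
proof (induction j)
  case (Suc j)
  then show ?case by (simp add: funpow_Suc_right del: funpow.simps)
qed simp

lemma cr_eq_le: "cr n G t v = cr n H t w \<Longrightarrow> s \<le> t \<Longrightarrow> cr n G s v = cr n H s w"
  using cr_trunc[of n G s v "t - s"] cr_trunc[of n H s w "t - s"] by simp

lemma gcr_eq_le: "gcr n G t = gcr n H t \<Longrightarrow> s \<le> t \<Longrightarrow> gcr n G s = gcr n H s"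
proof -
  assume a: "gcr n G t = gcr n H t" "s \<le> t"
  have "gcr n X s = image_mset (crp ^^ (t - s)) (gcr n X t)" for X
  proof -
    have "cr n X s = (crp ^^ (t - s)) \<circ> cr n X t"
      using a(2) cr_trunc[of n X s _ "t - s"] by (simp add: fun_eq_iff)
    then show ?thesis unfolding gcr_def by (simp add: multiset.map_comp)
  qed
  then show ?thesis using a by metis
qed

fun wlp :: "wlcol \<Rightarrow> wlcol" where
  "wlp (WInit f) = WInit f" | "wlp (WRef c M) = c"

lemma wl_trunc: "wl n G s v = (wlp ^^ j) (wl n G (s + j) v)"
proof (induction j)
  case (Suc j)
  then show ?case by (simp add: funpow_Suc_right del: funpow.simps)
qed simp

lemma wl_eq_le: "wl n G t v = wl n H t w \<Longrightarrow> s \<le> t \<Longrightarrow> wl n G s v = wl n H s w"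
  using wl_trunc[of n G s v "t - s"] wl_trunc[of n H s w "t - s"] by simp

lemma gwl_eq_le: "gwl n G k t = gwl n H k t \<Longrightarrow> s \<le> t \<Longrightarrow> gwl n G k s = gwl n H k s"
proof -
  assume a: "gwl n G k t = gwl n H k t" "s \<le> t"
  have "gwl n X k s = image_mset (wlp ^^ (t - s)) (gwl n X k t)" for X
  proof -
    have "wl n X s = (wlp ^^ (t - s)) \<circ> wl n X t"
      using a(2) wl_trunc[of n X s _ "t - s"] by (simp add: fun_eq_iff)
    then show ?thesis unfolding gwl_def by (simp add: multiset.map_comp)
  qed
  then show ?thesis using a by metis
qed



lemma inner: "concat (map (\<lambda>j. if P j then [g j] else []) ys) = map g (filter P ys)"
  by (induction ys) auto
lemma compr_map: "[f i j. i \<leftarrow> xs, j \<leftarrow> ys, P i j] = map (\<lambda>(i,j). f i j) [(i,j). i \<leftarrow> xs, j \<leftarrow> ys, P i j]"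
  by (induction xs) (simp_all add: inner)
lemma set_pairs: "set [(i,j). i \<leftarrow> [0..<m], j \<leftarrow> [0..<m], i < j] = {(i,j). i < j \<and> j < m}"
  by auto

lemma atp_alt: "atp G vs = (map (\<lambda>(i,j). (vs!i = vs!j, {vs!i,vs!j}\<in>edges G)) [(i,j). i \<leftarrow> [0..<length vs], j \<leftarrow> [0..<length vs], i < j], map (col G) vs)"
  unfolding atp_def by (subst compr_map) simp

lemma map_eq_nth: "length vs = length ws \<Longrightarrow> map f vs = map g ws \<longleftrightarrow> (\<forall>i<length vs. f (vs!i) = g (ws!i))"
  by (simp add: list_eq_iff_nth_eq)

lemma pairs_ball: "(\<forall>p\<in>set [(i,j). i \<leftarrow> [0..<m], j \<leftarrow> [0..<m], i < j]. Q p) \<longleftrightarrow> (\<forall>i j. i < j \<and> j < m \<longrightarrow> Q (i,j))"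
  unfolding set_pairs by blast

lemma atp_eq_iff:
  assumes "length vs = length ws"
  shows "atp G vs = atp H ws \<longleftrightarrow>
    (\<forall>i j. i < j \<and> j < length vs \<longrightarrow> (vs!i = vs!j \<longleftrightarrow> ws!i = ws!j) \<and> ({vs!i,vs!j}\<in>edges G \<longleftrightarrow> {ws!i,ws!j}\<in>edges H))
    \<and> (\<forall>i<length vs. col G (vs!i) = col H (ws!i))" (is "_ \<longleftrightarrow> ?R")
proof -
  let ?P = "[(i,j). i \<leftarrow> [0..<length vs], j \<leftarrow> [0..<length vs], i < j]"
  have "atp G vs = atp H ws \<longleftrightarrow>
     map (\<lambda>(i,j). (vs!i = vs!j, {vs!i,vs!j}\<in>edges G)) ?P = map (\<lambda>(i,j). (ws!i = ws!j, {ws!i,ws!j}\<in>edges H)) ?P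
     \<and> map (col G) vs = map (col H) ws"
    unfolding atp_alt using assms by (simp only: prod.inject)
  also have "\<dots> \<longleftrightarrow> (\<forall>p\<in>set ?P. (\<lambda>(i,j). (vs!i = vs!j, {vs!i,vs!j}\<in>edges G)) p = (\<lambda>(i,j). (ws!i = ws!j, {ws!i,ws!j}\<in>edges H)) p)
     \<and> (\<forall>i<length vs. col G (vs!i) = col H (ws!i))"
    using assms by (simp only: map_eq_conv map_eq_nth)
  also have "\<dots> \<longleftrightarrow> ?R"
    unfolding pairs_ball by (simp only: prod.case prod.inject)
  finally show ?thesis .
qed

lemma graph_noloop: "G \<in> graphs n l \<Longrightarrow> {a} \<notin> edges G"
  unfolding graphs_def edges_def by (force simp: doubleton_eq_iff)

lemma graph_col0: "G \<in> graphs n l \<Longrightarrow> v \<notin> {1..n} \<or> s \<notin> {1..l} \<Longrightarrow> col G v s = 0"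
  unfolding graphs_def col_def by auto

lemma graph_col_eq: "G \<in> graphs n l \<Longrightarrow> H \<in> graphs n l \<Longrightarrow> (\<forall>s\<in>{1..l}. col G v s = col H w s) \<Longrightarrow> col G v = col H w"
proof
  fix s assume a: "G \<in> graphs n l" "H \<in> graphs n l" "\<forall>s\<in>{1..l}. col G v s = col H w s"
  show "col G v s = col H w s"
  proof (cases "s \<in> {1..l}")
    case False
    then show ?thesis using graph_col0[OF a(1)] graph_col0[OF a(2)] by auto
  qed (use a in auto)
qed

lemma atp_eq_all:
  assumes "G \<in> graphs n l" "H \<in> graphs n l" "length vs = length ws" "atp G vs = atp H ws"
    "i < length vs" "j < length vs"
  shows "(vs!i = vs!j \<longleftrightarrow> ws!i = ws!j) \<and> ({vs!i,vs!j}\<in>edges G \<longleftrightarrow> {ws!i,ws!j}\<in>edges H)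
     \<and> col G (vs!i) = col H (ws!i)"
proof -
  have A: "\<forall>i j. i < j \<and> j < length vs \<longrightarrow> (vs!i = vs!j \<longleftrightarrow> ws!i = ws!j) \<and> ({vs!i,vs!j}\<in>edges G \<longleftrightarrow> {ws!i,ws!j}\<in>edges H)"
   and B: "\<forall>i<length vs. col G (vs!i) = col H (ws!i)"
    using assms(3,4) atp_eq_iff by blast+
  consider "i < j" | "i = j" | "j < i" by arith
  then show ?thesis
  proof cases
    case 1 then show ?thesis using A B assms(5,6) by blast
  next
    case 2 then show ?thesis using B assms graph_noloop by auto
  next
    case 3 then show ?thesis using A[rule_format, of j i] B assms(5,6) by (auto simp: insert_commute)
  qed
qed



definition MainP :: "nat \<Rightarrow> nat \<Rightarrow> graph \<Rightarrow> graph \<Rightarrow> tl \<Rightarrow> bool" where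
  "MainP n k G H \<phi> \<longleftrightarrow> (\<forall>t v w \<sigma>. sd \<phi> \<le> t \<longrightarrow> length v = k \<longrightarrow> length w = k \<longrightarrow>
      set v \<subseteq> {1..n} \<longrightarrow> set w \<subseteq> {1..n} \<longrightarrow> wl n G t v = wl n H t w \<longrightarrow>
      (\<forall>x\<in>free \<phi>. \<sigma> x < k) \<longrightarrow> sem n G (\<lambda>x. v ! \<sigma> x) \<phi> = sem n H (\<lambda>x. w ! \<sigma> x) \<phi>)"

definition InnerP :: "nat \<Rightarrow> nat \<Rightarrow> graph \<Rightarrow> graph \<Rightarrow> tl \<Rightarrow> bool" where
  "InnerP n k G H \<phi> \<longleftrightarrow> (\<forall>t v w u u' \<tau>. sd \<phi> \<le> t \<longrightarrow> length v = k \<longrightarrow> length w = k \<longrightarrow>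
      set v \<subseteq> {1..n} \<longrightarrow> set w \<subseteq> {1..n} \<longrightarrow> u \<in> {1..n} \<longrightarrow> u' \<in> {1..n} \<longrightarrow>
      atp G (v @ [u]) = atp H (w @ [u']) \<longrightarrow> wl n G t v = wl n H t w \<longrightarrow>
      (\<forall>i<k. wl n G t (v[i := u]) = wl n H t (w[i := u'])) \<longrightarrow>
      (\<forall>x\<in>free \<phi>. \<tau> x \<le> k) \<longrightarrow> sem n G (\<lambda>x. (v @ [u]) ! \<tau> x) \<phi> = sem n H (\<lambda>x. (w @ [u']) ! \<tau> x) \<phi>)"

lemma wl_atp: "wl n G t v = wl n H t w \<Longrightarrow> atp G v = atp H w"
  using wl_eq_le[of n G t v H w 0] by simp

lemma wl_Suc_eq:
  assumes "wl n G (Suc t) v = wl n H (Suc t) w"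
  shows "wl n G t v = wl n H t w"
    "image_mset (\<lambda>u. (atp G (v @ [u]), map (\<lambda>i. wl n G t (v[i := u])) [0..<length v])) (mset_set {1..n}) =
     image_mset (\<lambda>u. (atp H (w @ [u]), map (\<lambda>i. wl n H t (w[i := u])) [0..<length w])) (mset_set {1..n})"
  using assms by simp_all

lemma atom_eq:
  assumes G: "G \<in> graphs n l" and H: "H \<in> graphs n l"
    and len: "length p = length q" and a: "atp G p = atp H q"
    and x: "\<rho> x < length p" and y: "\<rho> y < length p"
  shows "sem n G (\<lambda>z. p ! \<rho> z) (EqI x y) = sem n H (\<lambda>z. q ! \<rho> z) (EqI x y)"
    "sem n G (\<lambda>z. p ! \<rho> z) (NeqI x y) = sem n H (\<lambda>z. q ! \<rho> z) (NeqI x y)"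
    "sem n G (\<lambda>z. p ! \<rho> z) (EdgeA x y) = sem n H (\<lambda>z. q ! \<rho> z) (EdgeA x y)"
    "sem n G (\<lambda>z. p ! \<rho> z) (Lab s x) = sem n H (\<lambda>z. q ! \<rho> z) (Lab s x)"
  using atp_eq_all[OF G H len a x y] by simp_all

lemma atomP:
  assumes "\<And>p q \<rho>. length p = length q \<Longrightarrow> atp G p = atp H q \<Longrightarrow> (\<forall>x\<in>free \<phi>. \<rho> x < length p)
     \<Longrightarrow> sem n G (\<lambda>z. p ! \<rho> z) \<phi> = sem n H (\<lambda>z. q ! \<rho> z) \<phi>"
  shows "MainP n k G H \<phi> \<and> InnerP n k G H \<phi>"
proof
  show "MainP n k G H \<phi>" unfolding MainP_def
  proof (intro allI impI)
    fix t v w \<sigma>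
    assume as: "sd \<phi> \<le> t" "length v = k" "length w = k" "set v \<subseteq> {1..n}" "set w \<subseteq> {1..n}"
        "wl n G t v = wl n H t w" "\<forall>x\<in>free \<phi>. \<sigma> x < k"
    show "sem n G (\<lambda>x. v ! \<sigma> x) \<phi> = sem n H (\<lambda>x. w ! \<sigma> x) \<phi>"
      using assms[of v w \<sigma>] as wl_atp[OF as(6)] by simp
  qed
  show "InnerP n k G H \<phi>" unfolding InnerP_def
  proof (intro allI impI)
    fix t v w u u' \<tau>
    assume as: "sd \<phi> \<le> t" "length v = k" "length w = k" "set v \<subseteq> {1..n}" "set w \<subseteq> {1..n}"
        "u \<in> {1..n}" "u' \<in> {1..n}" "atp G (v @ [u]) = atp H (w @ [u'])"
        "wl n G t v = wl n H t w" "\<forall>i<k. wl n G t (v[i := u]) = wl n H t (w[i := u'])"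
        "\<forall>x\<in>free \<phi>. \<tau> x \<le> k"
    show "sem n G (\<lambda>x. (v @ [u]) ! \<tau> x) \<phi> = sem n H (\<lambda>x. (w @ [u']) ! \<tau> x) \<phi>"
      using assms[of "v @ [u]" "w @ [u']" \<tau>] as by force
  qed
qed

lemma free_vars: "free \<phi> \<subseteq> vars \<phi>"
  by (induction \<phi>) auto

lemma map_upt_eq: "map f [0..<k] = map g [0..<k] \<Longrightarrow> i < k \<Longrightarrow> f i = g i"
  by (simp add: map_eq_conv)

lemma main_inner:
  assumes G: "G \<in> graphs n l" and H: "H \<in> graphs n l"
  shows "vars \<phi> \<subseteq> {1..Suc k} \<Longrightarrow> MainP n k G H \<phi> \<and> InnerP n k G H \<phi>"
proof (induction \<phi>)
  case (EqI x y)
  show ?case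
    apply (rule atomP)
    apply (rule atom_eq(1)[OF G H])
    by simp_all
next
  case (NeqI x y)
  show ?case
    apply (rule atomP)
    apply (rule atom_eq(2)[OF G H])
    by simp_all
next
  case (EdgeA x y)
  show ?case
    apply (rule atomP)
    apply (rule atom_eq(3)[OF G H])
    by simp_all
next
  case (Lab s x)
  show ?case
    apply (rule atomP)
    apply (rule atom_eq(4)[OF G H])
    by simp_all
next
  case (Mul a b)
  then have IH: "MainP n k G H a" "InnerP n k G H a" "MainP n k G H b" "InnerP n k G H b" by auto
  show ?case
  proof
    show "MainP n k G H (Mul a b)" unfolding MainP_def
    proof (intro allI impI)
      fix t v w \<sigma>
      assume as: "sd (Mul a b) \<le> t" "length v = k" "length w = k" "set v \<subseteq> {1..n}" "set w \<subseteq> {1..n}"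
        "wl n G t v = wl n H t w" "\<forall>x\<in>free (Mul a b). \<sigma> x < k"
      have "sem n G (\<lambda>x. v ! \<sigma> x) a = sem n H (\<lambda>x. w ! \<sigma> x) a"
        using IH(1) as unfolding MainP_def by auto
      moreover have "sem n G (\<lambda>x. v ! \<sigma> x) b = sem n H (\<lambda>x. w ! \<sigma> x) b"
        using IH(3) as unfolding MainP_def by auto
      ultimately show "sem n G (\<lambda>x. v ! \<sigma> x) (Mul a b) = sem n H (\<lambda>x. w ! \<sigma> x) (Mul a b)" by simp
    qed
    show "InnerP n k G H (Mul a b)" unfolding InnerP_def
    proof (intro allI impI)
      fix t v w u u' \<tau>
      assume as: "sd (Mul a b) \<le> t" "length v = k" "length w = k" "set v \<subseteq> {1..n}" "set w \<subseteq> {1..n}"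
        "u \<in> {1..n}" "u' \<in> {1..n}" "atp G (v @ [u]) = atp H (w @ [u'])"
        "wl n G t v = wl n H t w" "\<forall>i<k. wl n G t (v[i := u]) = wl n H t (w[i := u'])"
        "\<forall>x\<in>free (Mul a b). \<tau> x \<le> k"
      have "sem n G (\<lambda>x. (v @ [u]) ! \<tau> x) a = sem n H (\<lambda>x. (w @ [u']) ! \<tau> x) a"
        using IH(2) as unfolding InnerP_def by auto
      moreover have "sem n G (\<lambda>x. (v @ [u]) ! \<tau> x) b = sem n H (\<lambda>x. (w @ [u']) ! \<tau> x) b"
        using IH(4) as unfolding InnerP_def by auto
      ultimately show "sem n G (\<lambda>x. (v @ [u]) ! \<tau> x) (Mul a b) = sem n H (\<lambda>x. (w @ [u']) ! \<tau> x) (Mul a b)" by simp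
    qed
  qed
next
  case (Add a b)
  then have IH: "MainP n k G H a" "InnerP n k G H a" "MainP n k G H b" "InnerP n k G H b" by auto
  show ?case
  proof
    show "MainP n k G H (Add a b)" unfolding MainP_def
    proof (intro allI impI)
      fix t v w \<sigma>
      assume as: "sd (Add a b) \<le> t" "length v = k" "length w = k" "set v \<subseteq> {1..n}" "set w \<subseteq> {1..n}"
        "wl n G t v = wl n H t w" "\<forall>x\<in>free (Add a b). \<sigma> x < k"
      have "sem n G (\<lambda>x. v ! \<sigma> x) a = sem n H (\<lambda>x. w ! \<sigma> x) a"
        using IH(1) as unfolding MainP_def by auto
      moreover have "sem n G (\<lambda>x. v ! \<sigma> x) b = sem n H (\<lambda>x. w ! \<sigma> x) b"
        using IH(3) as unfolding MainP_def by auto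
      ultimately show "sem n G (\<lambda>x. v ! \<sigma> x) (Add a b) = sem n H (\<lambda>x. w ! \<sigma> x) (Add a b)" by simp
    qed
    show "InnerP n k G H (Add a b)" unfolding InnerP_def
    proof (intro allI impI)
      fix t v w u u' \<tau>
      assume as: "sd (Add a b) \<le> t" "length v = k" "length w = k" "set v \<subseteq> {1..n}" "set w \<subseteq> {1..n}"
        "u \<in> {1..n}" "u' \<in> {1..n}" "atp G (v @ [u]) = atp H (w @ [u'])"
        "wl n G t v = wl n H t w" "\<forall>i<k. wl n G t (v[i := u]) = wl n H t (w[i := u'])"
        "\<forall>x\<in>free (Add a b). \<tau> x \<le> k"
      have "sem n G (\<lambda>x. (v @ [u]) ! \<tau> x) a = sem n H (\<lambda>x. (w @ [u']) ! \<tau> x) a"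
        using IH(2) as unfolding InnerP_def by auto
      moreover have "sem n G (\<lambda>x. (v @ [u]) ! \<tau> x) b = sem n H (\<lambda>x. (w @ [u']) ! \<tau> x) b"
        using IH(4) as unfolding InnerP_def by auto
      ultimately show "sem n G (\<lambda>x. (v @ [u]) ! \<tau> x) (Add a b) = sem n H (\<lambda>x. (w @ [u']) ! \<tau> x) (Add a b)" by simp
    qed
  qed
next
  case (Scal c a)
  then have IH: "MainP n k G H a" "InnerP n k G H a" by auto
  then show ?case unfolding MainP_def InnerP_def by simp
next
  case (App f as)
  then have IH: "MainP n k G H a" "InnerP n k G H a" if "a \<in> set as" for a
    using that by auto
  have sdle: "sd a \<le> sd (App f as)" if "a \<in> set as" for a
    using that by (simp add: fold_max_mem)
  show ?case
  proof
    show "MainP n k G H (App f as)" unfolding MainP_def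
    proof (intro allI impI)
      fix t v w \<sigma>
      assume as: "sd (App f as) \<le> t" "length v = k" "length w = k" "set v \<subseteq> {1..n}" "set w \<subseteq> {1..n}"
        "wl n G t v = wl n H t w" "\<forall>x\<in>free (App f as). \<sigma> x < k"
      have "sem n G (\<lambda>x. v ! \<sigma> x) a = sem n H (\<lambda>x. w ! \<sigma> x) a" if "a \<in> set as" for a
        using IH(1)[OF that] as sdle[OF that] that unfolding MainP_def by (auto dest: le_trans)
      then have "map (sem n G (\<lambda>x. v ! \<sigma> x)) as = map (sem n H (\<lambda>x. w ! \<sigma> x)) as"
        by (intro map_cong) auto
      then show "sem n G (\<lambda>x. v ! \<sigma> x) (App f as) = sem n H (\<lambda>x. w ! \<sigma> x) (App f as)" by (simp only: sem.simps)
    qed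
    show "InnerP n k G H (App f as)" unfolding InnerP_def
    proof (intro allI impI)
      fix t v w u u' \<tau>
      assume as: "sd (App f as) \<le> t" "length v = k" "length w = k" "set v \<subseteq> {1..n}" "set w \<subseteq> {1..n}"
        "u \<in> {1..n}" "u' \<in> {1..n}" "atp G (v @ [u]) = atp H (w @ [u'])"
        "wl n G t v = wl n H t w" "\<forall>i<k. wl n G t (v[i := u]) = wl n H t (w[i := u'])"
        "\<forall>x\<in>free (App f as). \<tau> x \<le> k"
      have "sem n G (\<lambda>x. (v @ [u]) ! \<tau> x) a = sem n H (\<lambda>x. (w @ [u']) ! \<tau> x) a" if "a \<in> set as" for a
        using IH(2)[OF that] as sdle[OF that] that unfolding InnerP_def by (auto dest: le_trans)
      then have "map (sem n G (\<lambda>x. (v @ [u]) ! \<tau> x)) as = map (sem n H (\<lambda>x. (w @ [u']) ! \<tau> x)) as"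
        by (intro map_cong) auto
      then show "sem n G (\<lambda>x. (v @ [u]) ! \<tau> x) (App f as) = sem n H (\<lambda>x. (w @ [u']) ! \<tau> x) (App f as)" by (simp only: sem.simps)
    qed
  qed
next
  case (Sum x \<psi>)
  then have IH: "MainP n k G H \<psi>" "InnerP n k G H \<psi>" by auto
  have M: "MainP n k G H (Sum x \<psi>)" unfolding MainP_def
  proof (intro allI impI)
    fix t v w \<sigma>
    assume as: "sd (Sum x \<psi>) \<le> t" "length v = k" "length w = k" "set v \<subseteq> {1..n}" "set w \<subseteq> {1..n}"
      "wl n G t v = wl n H t w" "\<forall>y\<in>free (Sum x \<psi>). \<sigma> y < k"
    obtain t' where t: "t = Suc t'" "sd \<psi> \<le> t'" using as(1) by (cases t) auto
    define \<tau> where "\<tau> = \<sigma>(x := k)"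
    have tau: "\<forall>y\<in>free \<psi>. \<tau> y \<le> k" using as(7) by (auto simp: \<tau>_def less_imp_le)
    have eqG: "sem n G ((\<lambda>y. v ! \<sigma> y)(x := u)) \<psi> = sem n G (\<lambda>y. (v @ [u]) ! \<tau> y) \<psi>" for u
      by (rule sem_free) (use as(2,7) in \<open>auto simp: \<tau>_def nth_append\<close>)
    have eqH: "sem n H ((\<lambda>y. w ! \<sigma> y)(x := u)) \<psi> = sem n H (\<lambda>y. (w @ [u]) ! \<tau> y) \<psi>" for u
      by (rule sem_free) (use as(3,7) in \<open>auto simp: \<tau>_def nth_append\<close>)
    have wlt: "wl n G t' v = wl n H t' w" using wl_Suc_eq(1) as(6) t(1) by simp
    have ms: "image_mset (\<lambda>u. (atp G (v @ [u]), map (\<lambda>i. wl n G t' (v[i := u])) [0..<k])) (mset_set {1..n}) =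
     image_mset (\<lambda>u. (atp H (w @ [u]), map (\<lambda>i. wl n H t' (w[i := u])) [0..<k])) (mset_set {1..n})"
      using wl_Suc_eq(2)[of n G t' v H w] as(2,3,6) t(1) by simp
    have "(\<Sum>u\<in>{1..n}. sem n G (\<lambda>y. (v @ [u]) ! \<tau> y) \<psi>) = (\<Sum>u\<in>{1..n}. sem n H (\<lambda>y. (w @ [u]) ! \<tau> y) \<psi>)"
    proof (rule sum_eq_via_mset[OF _ _ ms])
      fix u u' assume u: "u \<in> {1..n}" "u' \<in> {1..n}"
        and e: "(atp G (v @ [u]), map (\<lambda>i. wl n G t' (v[i := u])) [0..<k]) = (atp H (w @ [u']), map (\<lambda>i. wl n H t' (w[i := u'])) [0..<k])"
      from e have a1: "atp G (v @ [u]) = atp H (w @ [u'])" by simp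
      from e have a2: "\<forall>i<k. wl n G t' (v[i := u]) = wl n H t' (w[i := u'])"
        by (auto intro: map_upt_eq)
      show "sem n G (\<lambda>y. (v @ [u]) ! \<tau> y) \<psi> = sem n H (\<lambda>y. (w @ [u']) ! \<tau> y) \<psi>"
        using IH(2)[unfolded InnerP_def, rule_format, OF t(2) as(2) as(3) as(4) as(5) u(1) u(2) a1 wlt a2[rule_format] tau[rule_format]] .
    qed auto
    then show "sem n G (\<lambda>y. v ! \<sigma> y) (Sum x \<psi>) = sem n H (\<lambda>y. w ! \<sigma> y) (Sum x \<psi>)"
      using eqG eqH by simp
  qed
  have I: "InnerP n k G H (Sum x \<psi>)" unfolding InnerP_def
  proof (intro allI impI)
    fix t v w u u' \<tau>
    assume as: "sd (Sum x \<psi>) \<le> t" "length v = k" "length w = k" "set v \<subseteq> {1..n}" "set w \<subseteq> {1..n}"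
        "u \<in> {1..n}" "u' \<in> {1..n}" "atp G (v @ [u]) = atp H (w @ [u'])"
        "wl n G t v = wl n H t w" "\<forall>i<k. wl n G t (v[i := u]) = wl n H t (w[i := u'])"
        "\<forall>y\<in>free (Sum x \<psi>). \<tau> y \<le> k"
    let ?F = "free (Sum x \<psi>)"
    show "sem n G (\<lambda>y. (v @ [u]) ! \<tau> y) (Sum x \<psi>) = sem n H (\<lambda>y. (w @ [u']) ! \<tau> y) (Sum x \<psi>)"
    proof (cases "\<forall>y\<in>?F. \<tau> y < k")
      case True
      have "sem n G (\<lambda>y. (v @ [u]) ! \<tau> y) (Sum x \<psi>) = sem n G (\<lambda>y. v ! \<tau> y) (Sum x \<psi>)"
        by (rule sem_free) (use True as(2) in \<open>auto simp: nth_append\<close>)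
      also have "\<dots> = sem n H (\<lambda>y. w ! \<tau> y) (Sum x \<psi>)"
        using M[unfolded MainP_def, rule_format, OF as(1) as(2) as(3) as(4) as(5) as(9) True[rule_format]] .
      also have "\<dots> = sem n H (\<lambda>y. (w @ [u']) ! \<tau> y) (Sum x \<psi>)"
        by (rule sem_free) (use True as(3) in \<open>auto simp: nth_append\<close>)
      finally show ?thesis .
    next
      case False
      then obtain y0 where y00: "y0 \<in> ?F" "\<not> \<tau> y0 < k" by blast
      then have y0: "y0 \<in> ?F" "\<tau> y0 = k" using as(11) le_neq_implies_less by blast+
      have vp: "vars \<psi> \<subseteq> {1..Suc k}" "x \<in> {1..Suc k}" using Sum.prems by simp_all
      have Fsub: "?F \<subseteq> {1..Suc k} - {x}"
      proof -
        have "?F = free \<psi> - {x}" by simp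
        also have "\<dots> \<subseteq> vars \<psi> - {x}" using free_vars[of \<psi>] by blast
        also have "\<dots> \<subseteq> {1..Suc k} - {x}" using vp(1) by blast
        finally show ?thesis .
      qed
      have finF: "finite ?F" by (rule finite_subset[OF Fsub]) simp
      have cardF: "card ?F \<le> k"
      proof -
        have "card ?F \<le> card ({1..Suc k} - {x})" by (rule card_mono[OF _ Fsub]) simp
        also have "\<dots> = k" using vp(2) by simp
        finally show ?thesis .
      qed
      have "\<exists>i<k. i \<notin> \<tau> ` ?F"
      proof (rule ccontr)
        assume "\<not> ?thesis"
        then have all: "\<forall>i<k. i \<in> \<tau> ` ?F" by blast
        have sub: "{0..k} \<subseteq> \<tau> ` ?F"
        proof
          fix i assume "i \<in> {0..k}"
          then have "i < k \<or> i = k" by auto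
          then show "i \<in> \<tau> ` ?F"
          proof
            assume "i < k" then show ?thesis using all by blast
          next
            assume "i = k" then show ?thesis using y0 by (metis image_eqI)
          qed
        qed
        have "card {0..k} \<le> card (\<tau> ` ?F)" by (rule card_mono[OF _ sub]) (use finF in simp)
        also have "\<dots> \<le> card ?F" by (rule card_image_le[OF finF])
        finally have "Suc k \<le> card ?F" by simp
        then show False using cardF by simp
      qed
      then obtain i where i: "i < k" "i \<notin> \<tau> ` ?F" by blast
      define \<sigma>' where "\<sigma>' y = (if \<tau> y = k then i else \<tau> y)" for y
      have sig: "\<forall>y\<in>?F. \<sigma>' y < k"
      proof
        fix y assume "y \<in> ?F"
        then have "\<tau> y \<le> k" using as(11) by blast
        then show "\<sigma>' y < k" using i(1) unfolding \<sigma>'_def by auto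
      qed
      have "sem n G (\<lambda>y. (v @ [u]) ! \<tau> y) (Sum x \<psi>) = sem n G (\<lambda>y. (v[i := u]) ! \<sigma>' y) (Sum x \<psi>)"
      proof (rule sem_free, intro ballI)
        fix y assume y: "y \<in> ?F"
        show "(v @ [u]) ! \<tau> y = (v[i := u]) ! \<sigma>' y"
        proof (cases "\<tau> y = k")
          case True then show ?thesis using as(2) i(1) by (simp add: \<sigma>'_def nth_append)
        next
          case False
          have "\<tau> y \<le> k" using as(11) y by blast
          then have "\<tau> y < k" using False by simp
          moreover have "\<tau> y \<noteq> i" using y i(2) by (metis image_eqI)
          ultimately
          show ?thesis using as(2) False by (simp add: \<sigma>'_def nth_append)
        qed
      qed
      also have "\<dots> = sem n H (\<lambda>y. (w[i := u']) ! \<sigma>' y) (Sum x \<psi>)"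
      proof -
        have "set (v[i := u]) \<subseteq> {1..n}" using as(4,6) set_update_subset_insert[of v i u] by blast
        moreover have "set (w[i := u']) \<subseteq> {1..n}" using as(5,7) set_update_subset_insert[of w i u'] by blast
        moreover have "wl n G t (v[i := u]) = wl n H t (w[i := u'])" using as(10) i(1) by blast
        moreover have "length (v[i := u]) = k" "length (w[i := u']) = k" using as(2,3) by simp_all
        ultimately show ?thesis using M[unfolded MainP_def, rule_format, OF as(1), of "v[i := u]" "w[i := u']" \<sigma>', OF _ _ _ _ _ sig[rule_format]]
          by blast
      qed
      also have "\<dots> = sem n H (\<lambda>y. (w @ [u']) ! \<tau> y) (Sum x \<psi>)"
      proof (rule sem_free, intro ballI)
        fix y assume y: "y \<in> ?F"
        show "(w[i := u']) ! \<sigma>' y = (w @ [u']) ! \<tau> y"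
        proof (cases "\<tau> y = k")
          case True then show ?thesis using as(3) i(1) by (simp add: \<sigma>'_def nth_append)
        next
          case False
          have "\<tau> y \<le> k" using as(11) y by blast
          then have "\<tau> y < k" using False by simp
          moreover have "\<tau> y \<noteq> i" using y i(2) by (metis image_eqI)
          ultimately
          show ?thesis using as(3) False by (simp add: \<sigma>'_def nth_append)
        qed
      qed
      finally show ?thesis .
    qed
  qed
  show ?case using M I by simp
qed



lemma tuples_eq: "tuples n k = set (List.n_lists k [1..<Suc n])"
  unfolding tuples_def set_n_lists by auto

lemma finite_tuples: "finite (tuples n k)"
  unfolding tuples_eq by simp

lemma replicate_tuples: "n \<ge> 1 \<Longrightarrow> replicate k 1 \<in> tuples n k"
  unfolding tuples_def by auto

lemma dir_gwl_TL:
  assumes G: "G \<in> graphs n l" and H: "H \<in> graphs n l" and n: "n \<ge> 1"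
    and eq: "gwl n G k (sd \<phi>) = gwl n H k (sd \<phi>)"
    and vars: "vars \<phi> \<subseteq> {1..Suc k}" and cl: "free \<phi> = {}"
  shows "closed_val n G \<phi> = closed_val n H \<phi>"
proof -
  let ?t = "sd \<phi>"
  define v where "v = replicate k (1::nat)"
  have v: "v \<in> tuples n k" using replicate_tuples[OF n] by (simp add: v_def)
  then have "wl n G ?t v \<in># gwl n G k ?t" unfolding gwl_def using finite_tuples by simp
  then have "wl n G ?t v \<in># gwl n H k ?t" using eq by simp
  then obtain w where w: "w \<in> tuples n k" "wl n H ?t w = wl n G ?t v"
    unfolding gwl_def using finite_tuples by auto
  have M: "MainP n k G H \<phi>" using main_inner[OF G H vars] by simp
  have "sem n G (\<lambda>x. v ! (\<lambda>_. 0) x) \<phi> = sem n H (\<lambda>x. w ! (\<lambda>_. 0) x) \<phi>"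
    using M[unfolded MainP_def, rule_format, of ?t v w "\<lambda>_. 0"] v w cl unfolding tuples_def by simp
  moreover have "closed_val n G \<phi> = sem n G (\<lambda>x. v ! (\<lambda>_. 0) x) \<phi>"
    unfolding closed_val_def by (rule sem_free) (simp add: cl)
  moreover have "closed_val n H \<phi> = sem n H (\<lambda>x. w ! (\<lambda>_. 0) x) \<phi>"
    unfolding closed_val_def by (rule sem_free) (simp add: cl)
  ultimately show ?thesis by simp
qed

lemma gwl1_alt: "gwl n G (Suc 0) t = image_mset (\<lambda>u. wl n G t [u]) (mset_set {1..n})"
proof -
  have tu: "tuples n (Suc 0) = (\<lambda>u. [u]) ` {1..n}"
    unfolding tuples_def by (auto simp: length_Suc_conv)
  have "mset_set (tuples n (Suc 0)) = image_mset (\<lambda>u. [u]) (mset_set {1..n})"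
    unfolding tu by (rule image_mset_mset_set[symmetric]) (simp add: inj_on_def)
  then show ?thesis unfolding gwl_def by (simp add: multiset.map_comp comp_def)
qed

lemma top1:
  assumes G: "G \<in> graphs n l" and H: "H \<in> graphs n l"
    and eq: "image_mset (\<lambda>u. wl n G t [u]) (mset_set {1..n}) = image_mset (\<lambda>u. wl n H t [u]) (mset_set {1..n})"
  shows "vars \<phi> \<subseteq> {1..2} \<Longrightarrow> free \<phi> = {} \<Longrightarrow> sd \<phi> \<le> Suc t \<Longrightarrow> sem n G \<nu> \<phi> = sem n H \<mu> \<phi>"
proof (induction \<phi> arbitrary: \<nu> \<mu>)
  case (Mul a b)
  have "sem n G \<nu> a = sem n H \<mu> a" "sem n G \<nu> b = sem n H \<mu> b"
    using Mul.IH Mul.prems by auto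
  then show ?case by simp
next
  case (Add a b)
  have "sem n G \<nu> a = sem n H \<mu> a" "sem n G \<nu> b = sem n H \<mu> b"
    using Add.IH Add.prems by auto
  then show ?case by simp
next
  case (Scal c a)
  have "sem n G \<nu> a = sem n H \<mu> a" using Scal.IH Scal.prems by auto
  then show ?case by simp
next
  case (App f as)
  have "sem n G \<nu> a = sem n H \<mu> a" if "a \<in> set as" for a
  proof (rule App.IH[OF that])
    show "vars a \<subseteq> {1..2}" using App.prems(1) that by auto
    show "free a = {}" using App.prems(2) that by auto
    show "sd a \<le> Suc t" using App.prems(3) fold_max_mem[of "sd a" "map sd as" 0] that by simp
  qed
  then have "map (sem n G \<nu>) as = map (sem n H \<mu>) as" by (intro map_cong) auto
  then show ?case by (simp only: sem.simps)
next
  case (Sum x \<psi>)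
  have fr: "free \<psi> \<subseteq> {x}" using Sum.prems(2) by auto
  have sdp: "sd \<psi> \<le> t" using Sum.prems(3) by simp
  have "vars \<psi> \<subseteq> {1..Suc (Suc 0)}" using Sum.prems(1) by (simp add: numeral_2_eq_2)
  then have M: "MainP n (Suc 0) G H \<psi>" using main_inner[OF G H, of \<psi> "Suc 0"] by auto
  have "(\<Sum>u\<in>{1..n}. sem n G (\<nu>(x := u)) \<psi>) = (\<Sum>u\<in>{1..n}. sem n H (\<mu>(x := u)) \<psi>)"
  proof (rule sum_eq_via_mset[OF _ _ eq])
    fix u u' assume u: "u \<in> {1..n}" "u' \<in> {1..n}" and e: "wl n G t [u] = wl n H t [u']"
    have "sem n G (\<nu>(x := u)) \<psi> = sem n G (\<lambda>y. [u] ! (\<lambda>_. 0) y) \<psi>"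
      by (rule sem_free) (use fr in auto)
    also have "\<dots> = sem n H (\<lambda>y. [u'] ! (\<lambda>_. 0) y) \<psi>"
      using M[unfolded MainP_def, rule_format, of t "[u]" "[u']" "\<lambda>_. 0"] sdp u e by simp
    also have "\<dots> = sem n H (\<mu>(x := u')) \<psi>"
      by (rule sem_free) (use fr in auto)
    finally show "sem n G (\<nu>(x := u)) \<psi> = sem n H (\<mu>(x := u')) \<psi>" .
  qed auto
  then show ?case by simp
qed auto

lemma dir_gwl1_TL:
  assumes G: "G \<in> graphs n l" and H: "H \<in> graphs n l"
    and eq: "gwl n G 1 t = gwl n H 1 t"
    and vars: "vars \<phi> \<subseteq> {1..2}" and cl: "free \<phi> = {}" and sd: "sd \<phi> \<le> t + 1"
  shows "closed_val n G \<phi> = closed_val n H \<phi>"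
  unfolding closed_val_def
  by (rule top1[OF G H]) (use eq vars cl sd gwl1_alt in auto)



lemma decomp:
  assumes G: "G \<in> graphs n l" and a: "a \<in> {1..n}"
  shows "image_mset (\<lambda>u. (u = a, {a, u} \<in> edges G, cr n G d u)) (mset_set {1..n}) =
    {#(True, False, cr n G d a)#} + image_mset (\<lambda>c. (False, True, c)) (image_mset (cr n G d) (mset_set (nbrs n G a)))
    + image_mset (\<lambda>c. (False, False, c)) (gcr n G d - image_mset (cr n G d) (mset_set (nbrs n G a)) - {#cr n G d a#})"
proof -
  let ?N = "nbrs n G a"
  let ?R = "{1..n} - ?N - {a}"
  let ?f = "\<lambda>u. (u = a, {a, u} \<in> edges G, cr n G d u)"
  have aN: "a \<notin> ?N" using graph_noloop[OF G, of a] unfolding nbrs_def by auto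
  have NV: "?N \<subseteq> {1..n}" unfolding nbrs_def by auto
  have finN: "finite ?N" using NV by (rule finite_subset) simp
  have Veq: "{1..n} = ({a} \<union> ?N) \<union> ?R" using a NV by auto
  have ms: "mset_set {1..n} = ({#a#} + mset_set ?N) + mset_set ?R"
  proof -
    have "mset_set {1..n} = mset_set ({a} \<union> ?N) + mset_set ?R"
      by (subst Veq, rule mset_set_Union) (use finN in auto)
    also have "mset_set ({a} \<union> ?N) = mset_set {a} + mset_set ?N"
      by (rule mset_set_Union) (use finN aN in auto)
    finally show ?thesis by simp
  qed
  have g: "gcr n G d = ({#cr n G d a#} + image_mset (cr n G d) (mset_set ?N)) + image_mset (cr n G d) (mset_set ?R)"
    unfolding gcr_def ms by simp
  have g2: "gcr n G d - image_mset (cr n G d) (mset_set ?N) - {#cr n G d a#} = image_mset (cr n G d) (mset_set ?R)"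
    unfolding g by (simp add: add.assoc)
  have fa: "?f a = (True, False, cr n G d a)" using graph_noloop[OF G, of a] by simp
  have fN: "image_mset ?f (mset_set ?N) = image_mset (\<lambda>c. (False, True, c)) (image_mset (cr n G d) (mset_set ?N))"
  proof -
    have "image_mset ?f (mset_set ?N) = image_mset (\<lambda>u. (False, True, cr n G d u)) (mset_set ?N)"
    proof (rule image_mset_cong)
      fix u assume "u \<in># mset_set ?N"
      then have "u \<in> ?N" using finN by simp
      then have "u \<noteq> a" "{a, u} \<in> edges G" using aN unfolding nbrs_def by (auto simp: insert_commute)
      then show "?f u = (False, True, cr n G d u)" by simp
    qed
    then show ?thesis by (simp add: multiset.map_comp comp_def)
  qed
  have fR: "image_mset ?f (mset_set ?R) = image_mset (\<lambda>c. (False, False, c)) (image_mset (cr n G d) (mset_set ?R))"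
  proof -
    have "image_mset ?f (mset_set ?R) = image_mset (\<lambda>u. (False, False, cr n G d u)) (mset_set ?R)"
    proof (rule image_mset_cong)
      fix u assume "u \<in># mset_set ?R"
      then have "u \<in> ?R" by simp
      then have "u \<noteq> a" "{a, u} \<notin> edges G" unfolding nbrs_def by (auto simp: insert_commute)
      then show "?f u = (False, False, cr n G d u)" by simp
    qed
    then show ?thesis by (simp add: multiset.map_comp comp_def)
  qed
  show ?thesis unfolding g2 unfolding ms using fa fN fR by simp
qed

definition CrP :: "nat \<Rightarrow> graph \<Rightarrow> graph \<Rightarrow> tl \<Rightarrow> bool" where
  "CrP n G H \<phi> \<longleftrightarrow> (\<forall>d \<nu> \<mu>. sd \<phi> \<le> d \<longrightarrow> (\<forall>s<d. gcr n G s = gcr n H s) \<longrightarrow>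
     (\<forall>x\<in>free \<phi>. \<nu> x \<in> {1..n} \<and> \<mu> x \<in> {1..n} \<and> cr n G d (\<nu> x) = cr n H d (\<mu> x)) \<longrightarrow>
     (\<forall>x\<in>free \<phi>. \<forall>y\<in>free \<phi>. (\<nu> x = \<nu> y \<longleftrightarrow> \<mu> x = \<mu> y) \<and> ({\<nu> x, \<nu> y} \<in> edges G \<longleftrightarrow> {\<mu> x, \<mu> y} \<in> edges H)) \<longrightarrow>
     sem n G \<nu> \<phi> = sem n H \<mu> \<phi>)"

lemma cr_col: "cr n G d v = cr n H d w \<Longrightarrow> col G v = col H w"
  using cr_eq_le[of n G d v H w 0] by simp

lemma crP:
  assumes G: "G \<in> graphs n l" and H: "H \<in> graphs n l"
  shows "vars \<phi> \<subseteq> {1..2} \<Longrightarrow> CrP n G H \<phi>"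
proof (induction \<phi>)
  case (EqI x y)
  then show ?case unfolding CrP_def by simp
next
  case (NeqI x y)
  then show ?case unfolding CrP_def by simp
next
  case (EdgeA x y)
  then show ?case unfolding CrP_def by simp
next
  case (Lab s x)
  then show ?case unfolding CrP_def by (auto dest: cr_col)
next
  case (Mul a b)
  then have IH: "CrP n G H a" "CrP n G H b" by auto
  show ?case unfolding CrP_def
  proof (intro allI impI)
    fix d \<nu> \<mu>
    assume as: "sd (Mul a b) \<le> d" "\<forall>s<d. gcr n G s = gcr n H s"
      "\<forall>x\<in>free (Mul a b). \<nu> x \<in> {1..n} \<and> \<mu> x \<in> {1..n} \<and> cr n G d (\<nu> x) = cr n H d (\<mu> x)"
      "\<forall>x\<in>free (Mul a b). \<forall>y\<in>free (Mul a b). (\<nu> x = \<nu> y \<longleftrightarrow> \<mu> x = \<mu> y) \<and> ({\<nu> x, \<nu> y} \<in> edges G \<longleftrightarrow> {\<mu> x, \<mu> y} \<in> edges H)"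
    have "sem n G \<nu> a = sem n H \<mu> a" using IH(1) as unfolding CrP_def by auto
    moreover have "sem n G \<nu> b = sem n H \<mu> b" using IH(2) as unfolding CrP_def by auto
    ultimately show "sem n G \<nu> (Mul a b) = sem n H \<mu> (Mul a b)" by simp
  qed
next
  case (Add a b)
  then have IH: "CrP n G H a" "CrP n G H b" by auto
  show ?case unfolding CrP_def
  proof (intro allI impI)
    fix d \<nu> \<mu>
    assume as: "sd (Add a b) \<le> d" "\<forall>s<d. gcr n G s = gcr n H s"
      "\<forall>x\<in>free (Add a b). \<nu> x \<in> {1..n} \<and> \<mu> x \<in> {1..n} \<and> cr n G d (\<nu> x) = cr n H d (\<mu> x)"
      "\<forall>x\<in>free (Add a b). \<forall>y\<in>free (Add a b). (\<nu> x = \<nu> y \<longleftrightarrow> \<mu> x = \<mu> y) \<and> ({\<nu> x, \<nu> y} \<in> edges G \<longleftrightarrow> {\<mu> x, \<mu> y} \<in> edges H)"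
    have "sem n G \<nu> a = sem n H \<mu> a" using IH(1) as unfolding CrP_def by auto
    moreover have "sem n G \<nu> b = sem n H \<mu> b" using IH(2) as unfolding CrP_def by auto
    ultimately show "sem n G \<nu> (Add a b) = sem n H \<mu> (Add a b)" by simp
  qed
next
  case (Scal c a)
  then have IH: "CrP n G H a" by auto
  then show ?case unfolding CrP_def by simp
next
  case (App f as)
  then have IH: "CrP n G H a" if "a \<in> set as" for a using that by auto
  show ?case unfolding CrP_def
  proof (intro allI impI)
    fix d \<nu> \<mu>
    assume as: "sd (App f as) \<le> d" "\<forall>s<d. gcr n G s = gcr n H s"
      "\<forall>x\<in>free (App f as). \<nu> x \<in> {1..n} \<and> \<mu> x \<in> {1..n} \<and> cr n G d (\<nu> x) = cr n H d (\<mu> x)"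
      "\<forall>x\<in>free (App f as). \<forall>y\<in>free (App f as). (\<nu> x = \<nu> y \<longleftrightarrow> \<mu> x = \<mu> y) \<and> ({\<nu> x, \<nu> y} \<in> edges G \<longleftrightarrow> {\<mu> x, \<mu> y} \<in> edges H)"
    have "sem n G \<nu> a = sem n H \<mu> a" if "a \<in> set as" for a
    proof -
      have "sd a \<le> d" using as(1) fold_max_mem[of "sd a" "map sd as" 0] that by simp
      moreover have "free a \<subseteq> free (App f as)" using that by auto
      ultimately show ?thesis using IH[OF that] as(2-4) unfolding CrP_def by blast
    qed
    then have "map (sem n G \<nu>) as = map (sem n H \<mu>) as" by (intro map_cong) auto
    then show "sem n G \<nu> (App f as) = sem n H \<mu> (App f as)" by (simp only: sem.simps)
  qed
next
  case (Sum x \<psi>)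
  then have IH: "CrP n G H \<psi>" by auto
  show ?case unfolding CrP_def
  proof (intro allI impI)
    fix d \<nu> \<mu>
    assume as: "sd (Sum x \<psi>) \<le> d" "\<forall>s<d. gcr n G s = gcr n H s"
      "\<forall>x'\<in>free (Sum x \<psi>). \<nu> x' \<in> {1..n} \<and> \<mu> x' \<in> {1..n} \<and> cr n G d (\<nu> x') = cr n H d (\<mu> x')"
      "\<forall>x'\<in>free (Sum x \<psi>). \<forall>y\<in>free (Sum x \<psi>). (\<nu> x' = \<nu> y \<longleftrightarrow> \<mu> x' = \<mu> y) \<and> ({\<nu> x', \<nu> y} \<in> edges G \<longleftrightarrow> {\<mu> x', \<mu> y} \<in> edges H)"
    obtain d' where d: "d = Suc d'" "sd \<psi> \<le> d'" using as(1) by (cases d) auto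
    have gs: "\<forall>s<d'. gcr n G s = gcr n H s" "gcr n G d' = gcr n H d'" using as(2) d(1) by auto
    show "sem n G \<nu> (Sum x \<psi>) = sem n H \<mu> (Sum x \<psi>)"
    proof (cases "free \<psi> \<subseteq> {x}")
      case True
      have "(\<Sum>u\<in>{1..n}. sem n G (\<nu>(x := u)) \<psi>) = (\<Sum>u\<in>{1..n}. sem n H (\<mu>(x := u)) \<psi>)"
      proof (rule sum_eq_via_mset[where f="cr n G d'" and g="cr n H d'"])
        show "image_mset (cr n G d') (mset_set {1..n}) = image_mset (cr n H d') (mset_set {1..n})"
          using gs(2) unfolding gcr_def .
        fix u u' assume u: "u \<in> {1..n}" "u' \<in> {1..n}" and e: "cr n G d' u = cr n H d' u'"
        show "sem n G (\<nu>(x := u)) \<psi> = sem n H (\<mu>(x := u')) \<psi>"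
          by (rule IH[unfolded CrP_def, rule_format, OF d(2) gs(1)[rule_format]])
            (use True u e graph_noloop[OF G, of u] graph_noloop[OF H, of u'] in auto)
      qed auto
      then show ?thesis by simp
    next
      case False
      then obtain y where y: "y \<in> free \<psi>" "y \<noteq> x" by auto
      have yF: "y \<in> free (Sum x \<psi>)" using y by simp
      have vp: "vars \<psi> \<subseteq> {1..2}" "x \<in> {1..2}" using Sum.prems by auto
      have "y \<in> {1..2}" using y(1) free_vars[of \<psi>] vp(1) by auto
      then have fr: "free \<psi> \<subseteq> {x, y}" using vp free_vars[of \<psi>] y(2) by auto
      let ?a = "\<nu> y" and ?b = "\<mu> y"
      have ab: "?a \<in> {1..n}" "?b \<in> {1..n}" "cr n G d ?a = cr n H d ?b" using as(3) yF by auto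
      have crab: "cr n G d' ?a = cr n H d' ?b"
        "image_mset (cr n G d') (mset_set (nbrs n G ?a)) = image_mset (cr n H d') (mset_set (nbrs n H ?b))"
        using ab(3) d(1) by simp_all
      have ms: "image_mset (\<lambda>u. (u = ?a, {?a, u} \<in> edges G, cr n G d' u)) (mset_set {1..n}) =
                image_mset (\<lambda>u. (u = ?b, {?b, u} \<in> edges H, cr n H d' u)) (mset_set {1..n})"
        unfolding decomp[OF G ab(1)] decomp[OF H ab(2)] crab gs(2) ..
      have "(\<Sum>u\<in>{1..n}. sem n G (\<nu>(x := u)) \<psi>) = (\<Sum>u\<in>{1..n}. sem n H (\<mu>(x := u)) \<psi>)"
      proof (rule sum_eq_via_mset[OF _ _ ms])
        fix u u' assume u: "u \<in> {1..n}" "u' \<in> {1..n}"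
          and e: "(u = ?a, {?a, u} \<in> edges G, cr n G d' u) = (u' = ?b, {?b, u'} \<in> edges H, cr n H d' u')"
        have e1: "u = ?a \<longleftrightarrow> u' = ?b" "{?a, u} \<in> edges G \<longleftrightarrow> {?b, u'} \<in> edges H" "cr n G d' u = cr n H d' u'"
          using e by simp_all
        show "sem n G (\<nu>(x := u)) \<psi> = sem n H (\<mu>(x := u')) \<psi>"
        proof (rule IH[unfolded CrP_def, rule_format, OF d(2) gs(1)[rule_format]])
          fix z assume z: "z \<in> free \<psi>"
          then have "z = x \<or> z = y" using fr by auto
          then show "(\<nu>(x := u)) z \<in> {1..n} \<and> (\<mu>(x := u')) z \<in> {1..n} \<and> cr n G d' ((\<nu>(x := u)) z) = cr n H d' ((\<mu>(x := u')) z)"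
            using u e1 ab crab y(2) by auto
        next
          fix z z' assume z: "z \<in> free \<psi>" "z' \<in> free \<psi>"
          then have "z = x \<or> z = y" "z' = x \<or> z' = y" using fr by auto
          then show "((\<nu>(x := u)) z = (\<nu>(x := u)) z' \<longleftrightarrow> (\<mu>(x := u')) z = (\<mu>(x := u')) z') \<and>
              ({(\<nu>(x := u)) z, (\<nu>(x := u)) z'} \<in> edges G \<longleftrightarrow> {(\<mu>(x := u')) z, (\<mu>(x := u')) z'} \<in> edges H)"
            using e1 y(2) graph_noloop[OF G] graph_noloop[OF H] by (auto simp: insert_commute)
        qed
      qed auto
      then show ?thesis by simp
    qed
  qed
qed

lemma dir_gcr_TL:
  assumes G: "G \<in> graphs n l" and H: "H \<in> graphs n l"
    and eq: "gcr n G t = gcr n H t"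
    and vars: "vars \<phi> \<subseteq> {1..2}" and cl: "free \<phi> = {}" and sd: "sd \<phi> \<le> t + 1"
  shows "closed_val n G \<phi> = closed_val n H \<phi>"
proof -
  have "\<forall>s<t+1. gcr n G s = gcr n H s" using gcr_eq_le[OF eq] by auto
  then show ?thesis unfolding closed_val_def
    using crP[OF G H vars, unfolded CrP_def, rule_format, of "t+1"] sd cl by simp
qed



declare upt_Suc [simp del]

lemma prod_list_ones: "prod_list (map (\<lambda>_. 1::real) xs) = 1"
  by (induction xs) auto

definition one :: "nat \<Rightarrow> tl" where "one x = EqI x x"

fun prodL :: "nat \<Rightarrow> tl list \<Rightarrow> tl" where
  "prodL x [] = one x"
| "prodL x (e # es) = Mul e (prodL x es)"

lemma sem_one [simp]: "sem n G \<nu> (one x) = 1"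
  by (simp add: one_def)

lemma sem_prodL: "sem n G \<nu> (prodL x es) = prod_list (map (sem n G \<nu>) es)"
  by (induction es) auto

lemma prodL_bool:
  "(\<And>r. r \<in> set rs \<Longrightarrow> sem n G \<nu> (g r) = of_bool (Q r)) \<Longrightarrow>
   sem n G \<nu> (prodL x (map g rs)) = of_bool (\<forall>r\<in>set rs. Q r)"
  by (induction rs) auto

lemma vars_prodL: "(\<forall>e\<in>set es. vars e \<subseteq> S) \<Longrightarrow> x \<in> S \<Longrightarrow> vars (prodL x es) \<subseteq> S"
  by (induction es) (auto simp: one_def)
lemma free_prodL: "(\<forall>e\<in>set es. free e \<subseteq> S) \<Longrightarrow> x \<in> S \<Longrightarrow> free (prodL x es) \<subseteq> S"
  by (induction es) (auto simp: one_def)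
lemma sd_prodL: "(\<forall>e\<in>set es. sd e \<le> t) \<Longrightarrow> sd (prodL x es) \<le> t"
  by (induction es) (auto simp: one_def)
lemma wf_prodL: "(\<forall>e\<in>set es. wf \<Omega> l e) \<Longrightarrow> wf \<Omega> l (prodL x es)"
  by (induction es) (auto simp: one_def)

definition indv :: "nat \<Rightarrow> tl \<Rightarrow> real \<Rightarrow> real list \<Rightarrow> tl" where
  "indv x e r Rs = prodL x (map (\<lambda>r'. Scal (1 / (r - r')) (Add e (Scal (- r') (one x)))) (filter (\<lambda>r'. r' \<noteq> r) Rs))"

lemma sem_indv:
  assumes "sem n G \<nu> e \<in> set Rs"
  shows "sem n G \<nu> (indv x e r Rs) = of_bool (sem n G \<nu> e = r)"
proof (cases "sem n G \<nu> e = r")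
  case True
  have "map (sem n G \<nu>) (map (\<lambda>r'. Scal (1 / (r - r')) (Add e (Scal (- r') (one x)))) (filter (\<lambda>r'. r' \<noteq> r) Rs))
      = map (\<lambda>_. 1) (filter (\<lambda>r'. r' \<noteq> r) Rs)"
    using True by (auto simp: field_simps)
  then show ?thesis unfolding indv_def sem_prodL using True
    by (simp only: prod_list_ones) simp
next
  case False
  let ?v = "sem n G \<nu> e"
  have "?v \<in> set (filter (\<lambda>r'. r' \<noteq> r) Rs)" using assms False by simp
  then have "0 \<in> set (map (sem n G \<nu>) (map (\<lambda>r'. Scal (1 / (r - r')) (Add e (Scal (- r') (one x)))) (filter (\<lambda>r'. r' \<noteq> r) Rs)))"
    by (force simp: image_iff)
  then show ?thesis unfolding indv_def sem_prodL using False by (simp add: prod_list_zero_iff del: map_map)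
qed

lemma vars_indv: "vars e \<subseteq> S \<Longrightarrow> x \<in> S \<Longrightarrow> vars (indv x e r Rs) \<subseteq> S"
  unfolding indv_def by (rule vars_prodL) (auto simp: one_def)
lemma free_indv: "free e \<subseteq> S \<Longrightarrow> x \<in> S \<Longrightarrow> free (indv x e r Rs) \<subseteq> S"
  unfolding indv_def by (rule free_prodL) (auto simp: one_def)
lemma sd_indv: "sd e \<le> t \<Longrightarrow> sd (indv x e r Rs) \<le> t"
  unfolding indv_def by (rule sd_prodL) (auto simp: one_def)
lemma wf_indv: "wf \<Omega> l e \<Longrightarrow> wf \<Omega> l (indv x e r Rs)"
  unfolding indv_def by (rule wf_prodL) (auto simp: one_def)

definition labind :: "nat \<Rightarrow> nat \<Rightarrow> (nat \<Rightarrow> real) \<Rightarrow> (nat \<Rightarrow> real) list \<Rightarrow> tl" where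
  "labind l x c CV = prodL x (map (\<lambda>s. indv x (Lab s x) (c s) (map (\<lambda>d. d s) CV)) [1..<Suc l])"

lemma sem_labind:
  assumes G: "G \<in> graphs n l" and Gw: "Gw \<in> graphs n l" and inCV: "col G (\<nu> x) \<in> set CV"
  shows "sem n G \<nu> (labind l x (col Gw w) CV) = of_bool (col G (\<nu> x) = col Gw w)"
proof -
  have "sem n G \<nu> (labind l x (col Gw w) CV) = of_bool (\<forall>s\<in>set [1..<Suc l]. col G (\<nu> x) s = col Gw w s)"
    unfolding labind_def
  proof (rule prodL_bool)
    fix s assume "s \<in> set [1..<Suc l]"
    have "sem n G \<nu> (Lab s x) \<in> set (map (\<lambda>d. d s) CV)" using inCV by simp
    then show "sem n G \<nu> (indv x (Lab s x) (col Gw w s) (map (\<lambda>d. d s) CV)) = of_bool (col G (\<nu> x) s = col Gw w s)"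
      by (simp add: sem_indv)
  qed
  also have "(\<forall>s\<in>set [1..<Suc l]. col G (\<nu> x) s = col Gw w s) \<longleftrightarrow> col G (\<nu> x) = col Gw w"
    using graph_col_eq[OF G Gw, of "\<nu> x" w] by (auto simp: atLeastLessThanSuc_atLeastAtMost)
  finally show ?thesis .
qed

lemma vars_labind: "x \<in> S \<Longrightarrow> vars (labind l x c CV) \<subseteq> S"
  unfolding labind_def by (rule vars_prodL) (simp_all add: vars_indv)
lemma free_labind: "x \<in> S \<Longrightarrow> free (labind l x c CV) \<subseteq> S"
  unfolding labind_def by (rule free_prodL) (simp_all add: free_indv)
lemma sd_labind: "sd (labind l x c CV) \<le> t"
  unfolding labind_def by (rule sd_prodL) (auto intro!: sd_indv)
lemma wf_labind: "wf \<Omega> l (labind l x c CV)"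
  unfolding labind_def by (rule wf_prodL) (auto intro!: wf_indv)

definition pairs :: "nat \<Rightarrow> (nat \<times> nat) list" where
  "pairs m = [(i,j). i \<leftarrow> [0..<m], j \<leftarrow> [0..<m], i < j]"

lemma set_pairs': "set (pairs m) = {(i,j). i < j \<and> j < m}"
  unfolding pairs_def by (rule set_pairs)

definition atpind :: "nat \<Rightarrow> (nat \<Rightarrow> real) list \<Rightarrow> graph \<Rightarrow> nat list \<Rightarrow> tl" where
  "atpind l CV Gw ws = Mul
     (prodL 1 (map (\<lambda>(i,j). Mul (if ws!i = ws!j then EqI (Suc i) (Suc j) else NeqI (Suc i) (Suc j))
                             (if {ws!i, ws!j} \<in> edges Gw then EdgeA (Suc i) (Suc j)
                              else Add (one 1) (Scal (-1) (EdgeA (Suc i) (Suc j)))))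
        (pairs (length ws))))
     (prodL 1 (map (\<lambda>i. labind l (Suc i) (col Gw (ws!i)) CV) [0..<length ws]))"

lemma sem_atpind:
  assumes G: "G \<in> graphs n l" and Gw: "Gw \<in> graphs n l" and len: "length vs = length ws"
    and nu: "\<forall>i<length vs. \<nu> (Suc i) = vs ! i" and inCV: "\<forall>i<length vs. col G (vs ! i) \<in> set CV"
  shows "sem n G \<nu> (atpind l CV Gw ws) = of_bool (atp G vs = atp Gw ws)"
proof -
  let ?m = "length ws"
  have A: "sem n G \<nu> (prodL 1 (map (\<lambda>(i,j). Mul (if ws!i = ws!j then EqI (Suc i) (Suc j) else NeqI (Suc i) (Suc j))
                             (if {ws!i, ws!j} \<in> edges Gw then EdgeA (Suc i) (Suc j)
                              else Add (one 1) (Scal (-1) (EdgeA (Suc i) (Suc j)))))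
        (pairs (length ws))))
     = of_bool (\<forall>p\<in>set (pairs (length ws)).
          (\<lambda>(i,j). (vs!i = vs!j \<longleftrightarrow> ws!i = ws!j) \<and> ({vs!i,vs!j}\<in>edges G \<longleftrightarrow> {ws!i,ws!j}\<in>edges Gw)) p)"
  proof (rule prodL_bool)
    fix p assume p: "p \<in> set (pairs (length ws))"
    obtain i j where ij: "p = (i,j)" "i < j" "j < ?m" using p unfolding set_pairs' by auto
    have "\<nu> (Suc i) = vs ! i" "\<nu> (Suc j) = vs ! j" using nu ij len by auto
    then show "sem n G \<nu> ((\<lambda>(i,j). Mul (if ws!i = ws!j then EqI (Suc i) (Suc j) else NeqI (Suc i) (Suc j))
                             (if {ws!i, ws!j} \<in> edges Gw then EdgeA (Suc i) (Suc j)
                              else Add (one 1) (Scal (-1) (EdgeA (Suc i) (Suc j))))) p) =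
      of_bool ((\<lambda>(i,j). (vs!i = vs!j \<longleftrightarrow> ws!i = ws!j) \<and> ({vs!i,vs!j}\<in>edges G \<longleftrightarrow> {ws!i,ws!j}\<in>edges Gw)) p)"
      unfolding ij(1) by auto
  qed
  have B: "sem n G \<nu> (prodL 1 (map (\<lambda>i. labind l (Suc i) (col Gw (ws!i)) CV) [0..<length ws]))
     = of_bool (\<forall>i\<in>set [0..<length ws]. col G (vs ! i) = col Gw (ws ! i))"
  proof (rule prodL_bool)
    fix i assume "i \<in> set [0..<length ws]"
    then have i: "i < length vs" using len by simp
    then show "sem n G \<nu> (labind l (Suc i) (col Gw (ws ! i)) CV) = of_bool (col G (vs ! i) = col Gw (ws ! i))"
      using sem_labind[OF G Gw, of \<nu> "Suc i" CV "ws ! i"] nu inCV by simp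
  qed
  show ?thesis unfolding atpind_def sem.simps A B atp_eq_iff[OF len] pairs_ball[folded pairs_def]
    using len by auto
qed

lemma vars_atpind: "vars (atpind l CV Gw ws) \<subseteq> {1..max 1 (length ws)}"
proof -
  have "vars (prodL 1 (map (\<lambda>(i,j). Mul (if ws!i = ws!j then EqI (Suc i) (Suc j) else NeqI (Suc i) (Suc j))
                             (if {ws!i, ws!j} \<in> edges Gw then EdgeA (Suc i) (Suc j)
                              else Add (one 1) (Scal (-1) (EdgeA (Suc i) (Suc j)))))
        (pairs (length ws)))) \<subseteq> {1..max 1 (length ws)}"
    by (rule vars_prodL) (auto simp: set_pairs' one_def)
  moreover have "vars (prodL 1 (map (\<lambda>i. labind l (Suc i) (col Gw (ws!i)) CV) [0..<length ws])) \<subseteq> {1..max 1 (length ws)}"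
    by (rule vars_prodL) (auto intro!: vars_labind)
  ultimately show ?thesis unfolding atpind_def by simp
qed
lemma free_atpind: "free (atpind l CV Gw ws) \<subseteq> {1..max 1 (length ws)}"
proof -
  have "free (prodL 1 (map (\<lambda>(i,j). Mul (if ws!i = ws!j then EqI (Suc i) (Suc j) else NeqI (Suc i) (Suc j))
                             (if {ws!i, ws!j} \<in> edges Gw then EdgeA (Suc i) (Suc j)
                              else Add (one 1) (Scal (-1) (EdgeA (Suc i) (Suc j)))))
        (pairs (length ws)))) \<subseteq> {1..max 1 (length ws)}"
    by (rule free_prodL) (auto simp: set_pairs' one_def)
  moreover have "free (prodL 1 (map (\<lambda>i. labind l (Suc i) (col Gw (ws!i)) CV) [0..<length ws])) \<subseteq> {1..max 1 (length ws)}"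
    by (rule free_prodL) (auto intro!: free_labind)
  ultimately show ?thesis unfolding atpind_def by simp
qed
lemma sd_atpind: "sd (atpind l CV Gw ws) \<le> t"
proof -
  have "sd (prodL 1 (map (\<lambda>(i,j). Mul (if ws!i = ws!j then EqI (Suc i) (Suc j) else NeqI (Suc i) (Suc j))
                             (if {ws!i, ws!j} \<in> edges Gw then EdgeA (Suc i) (Suc j)
                              else Add (one 1) (Scal (-1) (EdgeA (Suc i) (Suc j)))))
        (pairs (length ws)))) \<le> t"
    by (rule sd_prodL) (auto simp: one_def)
  moreover have "sd (prodL 1 (map (\<lambda>i. labind l (Suc i) (col Gw (ws!i)) CV) [0..<length ws])) \<le> t"
    by (rule sd_prodL) (auto intro!: sd_labind)
  ultimately show ?thesis unfolding atpind_def by simp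
qed
lemma wf_atpind: "wf \<Omega> l (atpind l CV Gw ws)"
  unfolding atpind_def
  by (auto intro!: wf_prodL wf_labind simp: one_def)



definition CVs :: "nat \<Rightarrow> graph \<Rightarrow> graph \<Rightarrow> (nat \<Rightarrow> real) list" where
  "CVs n G H = [col Gz v. Gz \<leftarrow> [G, H], v \<leftarrow> [1..<Suc n]]"

definition Rs :: "nat \<Rightarrow> real list" where "Rs n = map real [0..<Suc n]"

definition reps2 :: "nat \<Rightarrow> graph \<Rightarrow> graph \<Rightarrow> (graph \<times> nat) list" where
  "reps2 n G H = [(Gz, z). Gz \<leftarrow> [G, H], z \<leftarrow> [1..<Suc n]]"

lemma col_in_CVs: "G' \<in> {G, H} \<Longrightarrow> v \<in> {1..n} \<Longrightarrow> col G' v \<in> set (CVs n G H)"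
  unfolding CVs_def by auto

lemma in_Rs: "c \<le> n \<Longrightarrow> real c \<in> set (Rs n)"
  unfolding Rs_def by auto

lemma set_reps2: "set (reps2 n G H) = {G, H} \<times> {1..n}"
  unfolding reps2_def by auto

lemma mset_eq_on:
  assumes "\<forall>x\<in>#M. x \<in> S" "\<forall>x\<in>#M'. x \<in> S"
  shows "(\<forall>x\<in>S. count M x = count M' x) \<longleftrightarrow> M = M'"
proof
  assume a: "\<forall>x\<in>S. count M x = count M' x"
  show "M = M'"
  proof (rule multiset_eqI)
    fix x show "count M x = count M' x"
    proof (cases "x \<in> S")
      case False
      then have "x \<notin># M" "x \<notin># M'" using assms by auto
      then show ?thesis by (simp add: not_in_iff)
    qed (use a in auto)
  qed
qed simp

lemma of_bool_mult: "(of_bool A * of_bool B :: real) = of_bool (A \<and> B)"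
  by simp

lemma cfeat:
  assumes G': "G' \<in> graphs n l" and v: "\<nu> 1 \<in> {1..n}"
    and phi: "\<And>\<nu>' u. u \<in> {1..n} \<Longrightarrow> \<nu>' 1 = u \<Longrightarrow> sem n G' \<nu>' \<phi> = of_bool (g u = c)"
  shows "sem n G' \<nu> (Sum 2 (Mul (EdgeA 1 2) (ren (sw 1 2) \<phi>))) = real (count (image_mset g (mset_set (nbrs n G' (\<nu> 1)))) c)"
proof -
  let ?N = "nbrs n G' (\<nu> 1)"
  have "sem n G' \<nu> (Sum 2 (Mul (EdgeA 1 2) (ren (sw 1 2) \<phi>))) =
      (\<Sum>u\<in>{1..n}. of_bool ({\<nu> 1, u} \<in> edges G') * sem n G' ((\<nu>(2 := u)) \<circ> sw 1 2) \<phi>)"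
    by (simp add: sem_ren inj_sw of_bool_def)
  also have "\<dots> = (\<Sum>u\<in>{1..n}. of_bool ({\<nu> 1, u} \<in> edges G') * of_bool (g u = c))"
  proof (rule sum.cong[OF refl])
    fix u assume u: "u \<in> {1..n}"
    have "((\<nu>(2 := u)) \<circ> sw 1 2) 1 = u" by (simp add: sw_def)
    then show "of_bool ({\<nu> 1, u} \<in> edges G') * sem n G' ((\<nu>(2 := u)) \<circ> sw 1 2) \<phi> = of_bool ({\<nu> 1, u} \<in> edges G') * of_bool (g u = c)"
      using phi[OF u] by simp
  qed
  also have "\<dots> = (\<Sum>u\<in>{1..n}. if u \<in> ?N then of_bool (g u = c) else 0)"
    by (rule sum.cong[OF refl]) (auto simp: nbrs_def insert_commute)
  also have "\<dots> = (\<Sum>u\<in>{u\<in>{1..n}. u \<in> ?N}. of_bool (g u = c))"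
    by (rule sum.inter_filter[symmetric]) simp
  also have "{u\<in>{1..n}. u \<in> ?N} = ?N" unfolding nbrs_def by auto
  also have "(\<Sum>u\<in>?N. (of_bool (g u = c) :: real)) = real (count (image_mset g (mset_set ?N)) c)"
    by (rule sum_of_bool_count) (simp add: nbrs_def)
  finally show ?thesis .
qed

primrec cphi :: "nat \<Rightarrow> nat \<Rightarrow> graph \<Rightarrow> graph \<Rightarrow> nat \<Rightarrow> graph \<Rightarrow> nat \<Rightarrow> tl" where
  "cphi n l G H 0 Gw w = labind l 1 (col Gw w) (CVs n G H)"
| "cphi n l G H (Suc t) Gw w = Mul (cphi n l G H t Gw w)
     (prodL 1 (map (\<lambda>(Gz, z). indv 1 (Sum 2 (Mul (EdgeA 1 2) (ren (sw 1 2) (cphi n l G H t Gz z))))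
         (real (count (image_mset (cr n Gw t) (mset_set (nbrs n Gw w))) (cr n Gz t z))) (Rs n)) (reps2 n G H)))"

lemma nbrs_sub: "nbrs n G v \<subseteq> {1..n}"
  unfolding nbrs_def by auto

lemma finite_nbrs [simp]: "finite (nbrs n G v)"
  by (rule finite_subset[OF nbrs_sub]) simp

lemma sem_cphi:
  assumes G: "G \<in> graphs n l" and H: "H \<in> graphs n l"
  shows "G' \<in> {G, H} \<Longrightarrow> Gw \<in> {G, H} \<Longrightarrow> \<nu> 1 \<in> {1..n} \<Longrightarrow> w \<in> {1..n} \<Longrightarrow>
    sem n G' \<nu> (cphi n l G H t Gw w) = of_bool (cr n G' t (\<nu> 1) = cr n Gw t w)"
proof (induction t arbitrary: \<nu> Gw w)
  case 0
  have gr: "G' \<in> graphs n l" "Gw \<in> graphs n l" using 0 G H by auto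
  show ?case using sem_labind[OF gr, of \<nu> 1 "CVs n G H" w] col_in_CVs[OF 0(1,3)] by simp
next
  case (Suc t)
  have gr: "G' \<in> graphs n l" "Gw \<in> graphs n l" using Suc.prems G H by auto
  let ?Nv = "image_mset (cr n G' t) (mset_set (nbrs n G' (\<nu> 1)))"
  let ?Nw = "image_mset (cr n Gw t) (mset_set (nbrs n Gw w))"
  have B: "sem n G' \<nu> (prodL 1 (map (\<lambda>(Gz, z). indv 1 (Sum 2 (Mul (EdgeA 1 2) (ren (sw 1 2) (cphi n l G H t Gz z))))
         (real (count ?Nw (cr n Gz t z))) (Rs n)) (reps2 n G H)))
     = of_bool (\<forall>r\<in>set (reps2 n G H). (\<lambda>(Gz, z). count ?Nv (cr n Gz t z) = count ?Nw (cr n Gz t z)) r)"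
  proof (rule prodL_bool)
    fix r assume r: "r \<in> set (reps2 n G H)"
    obtain Gz z where rz0: "r = (Gz, z)" by (metis surj_pair)
    then have rz: "r = (Gz, z)" "Gz \<in> {G, H}" "z \<in> {1..n}" using r unfolding set_reps2 by auto
    have fv: "sem n G' \<nu> (Sum 2 (Mul (EdgeA 1 2) (ren (sw 1 2) (cphi n l G H t Gz z)))) = real (count ?Nv (cr n Gz t z))"
      by (rule cfeat[where \<nu>=\<nu> and G'=G' and n=n, OF gr(1) Suc.prems(3)]) (use Suc.IH[OF Suc.prems(1) rz(2) _ rz(3)] in auto)
    have "count ?Nv (cr n Gz t z) \<le> n"
    proof -
      have fin: "finite (nbrs n G' (\<nu> 1))" by (rule finite_subset[OF nbrs_sub]) simp
      have "card (nbrs n G' (\<nu> 1)) \<le> card {1..n}" by (rule card_mono[OF _ nbrs_sub]) simp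
      then have "card (nbrs n G' (\<nu> 1)) \<le> n" by simp
      then show ?thesis using count_image_mset_set_le[OF fin, of "cr n G' t" "cr n Gz t z"] by linarith
    qed
    then have inR: "sem n G' \<nu> (Sum 2 (Mul (EdgeA 1 2) (ren (sw 1 2) (cphi n l G H t Gz z)))) \<in> set (Rs n)"
      unfolding fv using in_Rs by blast
    have "sem n G' \<nu> (indv 1 (Sum 2 (Mul (EdgeA 1 2) (ren (sw 1 2) (cphi n l G H t Gz z))))
         (real (count ?Nw (cr n Gz t z))) (Rs n)) = of_bool (real (count ?Nv (cr n Gz t z)) = real (count ?Nw (cr n Gz t z)))"
      using sem_indv[OF inR] unfolding fv .
    then show "sem n G' \<nu> ((\<lambda>(Gz, z). indv 1 (Sum 2 (Mul (EdgeA 1 2) (ren (sw 1 2) (cphi n l G H t Gz z))))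
         (real (count ?Nw (cr n Gz t z))) (Rs n)) r) = of_bool ((\<lambda>(Gz, z). count ?Nv (cr n Gz t z) = count ?Nw (cr n Gz t z)) r)"
      unfolding rz(1) prod.case of_nat_eq_iff .
  qed
  have eqv: "(\<forall>r\<in>set (reps2 n G H). (\<lambda>(Gz, z). count ?Nv (cr n Gz t z) = count ?Nw (cr n Gz t z)) r) \<longleftrightarrow> ?Nv = ?Nw"
  proof -
    let ?S = "(\<lambda>(Gz, z). cr n Gz t z) ` set (reps2 n G H)"
    have "(\<forall>r\<in>set (reps2 n G H). (\<lambda>(Gz, z). count ?Nv (cr n Gz t z) = count ?Nw (cr n Gz t z)) r) \<longleftrightarrow>
          (\<forall>x\<in>?S. count ?Nv x = count ?Nw x)" by auto
    also have "\<dots> \<longleftrightarrow> ?Nv = ?Nw"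
    proof (rule mset_eq_on)
      show "\<forall>x\<in>#?Nv. x \<in> ?S" using Suc.prems(1) nbrs_sub[of n G' "\<nu> 1"]
        by (auto simp: set_reps2 image_iff intro: finite_subset[OF nbrs_sub])
      show "\<forall>x\<in>#?Nw. x \<in> ?S" using Suc.prems(2) nbrs_sub[of n Gw w]
        by (auto simp: set_reps2 image_iff intro: finite_subset[OF nbrs_sub])
    qed
    finally show ?thesis .
  qed
  show ?case
    using Suc.IH[where \<nu>=\<nu>, OF Suc.prems] B eqv by (simp del: of_bool_eq add: of_bool_mult)
qed

lemma syn_cphi: "vars (cphi n l G H t Gw w) \<subseteq> {1..2} \<and> free (cphi n l G H t Gw w) \<subseteq> {1}
    \<and> sd (cphi n l G H t Gw w) \<le> t \<and> wf \<Omega> l (cphi n l G H t Gw w)"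
proof (induction t arbitrary: Gw w)
  case 0
  have "vars (labind l 1 (col Gw w) (CVs n G H)) \<subseteq> {1..2}" by (rule vars_labind) simp
  moreover have "free (labind l 1 (col Gw w) (CVs n G H)) \<subseteq> {1}" by (rule free_labind) simp
  moreover have "sd (labind l 1 (col Gw w) (CVs n G H)) \<le> 0" by (rule sd_labind)
  ultimately show ?case using wf_labind by simp
next
  case (Suc t)
  have sw1: "sw 1 2 ` {1} = {2}" "sw 1 2 ` {1..2} \<subseteq> {1..2}" by (auto simp: sw_def)
  have F: "\<forall>e\<in>set (map (\<lambda>(Gz, z). indv 1 (Sum 2 (Mul (EdgeA 1 2) (ren (sw 1 2) (cphi n l G H t Gz z))))
         (real (count (image_mset (cr n Gw t) (mset_set (nbrs n Gw w))) (cr n Gz t z))) (Rs n)) (reps2 n G H)).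
       vars e \<subseteq> {1..2} \<and> free e \<subseteq> {1} \<and> sd e \<le> Suc t \<and> wf \<Omega> l e"
  proof
    fix e assume "e \<in> set (map (\<lambda>(Gz, z). indv 1 (Sum 2 (Mul (EdgeA 1 2) (ren (sw 1 2) (cphi n l G H t Gz z))))
         (real (count (image_mset (cr n Gw t) (mset_set (nbrs n Gw w))) (cr n Gz t z))) (Rs n)) (reps2 n G H))"
    then obtain Gz z where e: "e = indv 1 (Sum 2 (Mul (EdgeA 1 2) (ren (sw 1 2) (cphi n l G H t Gz z))))
         (real (count (image_mset (cr n Gw t) (mset_set (nbrs n Gw w))) (cr n Gz t z))) (Rs n)" by auto
    let ?p = "cphi n l G H t Gz z"
    have IH: "vars ?p \<subseteq> {1..2}" "free ?p \<subseteq> {1}" "sd ?p \<le> t" "wf \<Omega> l ?p" using Suc.IH by auto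
    have V1: "vars (Sum 2 (Mul (EdgeA 1 2) (ren (sw 1 2) ?p))) \<subseteq> {1..2}"
      using IH(1) sw1(2) by (auto simp: vars_ren)
    have F1: "free (Sum 2 (Mul (EdgeA 1 2) (ren (sw 1 2) ?p))) \<subseteq> {1}"
    proof -
      have "sw 1 2 ` free ?p \<subseteq> {2}" using IH(2) sw1(1) by blast
      then show ?thesis by (auto simp: free_ren inj_sw)
    qed
    have S1: "sd (Sum 2 (Mul (EdgeA 1 2) (ren (sw 1 2) ?p))) \<le> Suc t" using IH(3) by (simp add: sd_ren)
    have W1: "wf \<Omega> l (Sum 2 (Mul (EdgeA 1 2) (ren (sw 1 2) ?p)))" using IH(4) by (simp add: wf_ren)
    have "vars e \<subseteq> {1..2}" unfolding e by (rule vars_indv[OF V1]) simp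
    moreover have "free e \<subseteq> {1}" unfolding e by (rule free_indv[OF F1]) simp
    moreover have "sd e \<le> Suc t" unfolding e by (rule sd_indv[OF S1])
    moreover have "wf \<Omega> l e" unfolding e by (rule wf_indv[OF W1])
    ultimately show "vars e \<subseteq> {1..2} \<and> free e \<subseteq> {1} \<and> sd e \<le> Suc t \<and> wf \<Omega> l e" by blast
  qed
  have "vars (cphi n l G H t Gw w) \<subseteq> {1..2}" "free (cphi n l G H t Gw w) \<subseteq> {1}"
      "sd (cphi n l G H t Gw w) \<le> Suc t" "wf \<Omega> l (cphi n l G H t Gw w)" using Suc.IH[of Gw w] by auto
  moreover have "vars (prodL 1 (map (\<lambda>(Gz, z). indv 1 (Sum 2 (Mul (EdgeA 1 2) (ren (sw 1 2) (cphi n l G H t Gz z))))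
         (real (count (image_mset (cr n Gw t) (mset_set (nbrs n Gw w))) (cr n Gz t z))) (Rs n)) (reps2 n G H))) \<subseteq> {1..2}"
    by (rule vars_prodL) (use F in auto)
  moreover have "free (prodL 1 (map (\<lambda>(Gz, z). indv 1 (Sum 2 (Mul (EdgeA 1 2) (ren (sw 1 2) (cphi n l G H t Gz z))))
         (real (count (image_mset (cr n Gw t) (mset_set (nbrs n Gw w))) (cr n Gz t z))) (Rs n)) (reps2 n G H))) \<subseteq> {1}"
    by (rule free_prodL) (use F in auto)
  moreover have "sd (prodL 1 (map (\<lambda>(Gz, z). indv 1 (Sum 2 (Mul (EdgeA 1 2) (ren (sw 1 2) (cphi n l G H t Gz z))))
         (real (count (image_mset (cr n Gw t) (mset_set (nbrs n Gw w))) (cr n Gz t z))) (Rs n)) (reps2 n G H))) \<le> Suc t"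
    by (rule sd_prodL) (use F in auto)
  moreover have "wf \<Omega> l (prodL 1 (map (\<lambda>(Gz, z). indv 1 (Sum 2 (Mul (EdgeA 1 2) (ren (sw 1 2) (cphi n l G H t Gz z))))
         (real (count (image_mset (cr n Gw t) (mset_set (nbrs n Gw w))) (cr n Gz t z))) (Rs n)) (reps2 n G H)))"
    by (rule wf_prodL) (use F in auto)
  ultimately show ?case by simp
qed

lemma dir_TL_gcr:
  assumes G: "G \<in> graphs n l" and H: "H \<in> graphs n l"
    and TLeq: "\<forall>\<phi>\<in>TLd \<Omega> l 2 (t + 1). free \<phi> = {} \<longrightarrow> closed_val n G \<phi> = closed_val n H \<phi>"
  shows "gcr n G t = gcr n H t"
proof (rule multiset_eqI)
  fix c
  have cnt: "closed_val n G' (Sum 1 (cphi n l G H t Gw w)) = real (count (gcr n G' t) c)"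
    if "G' \<in> {G, H}" "Gw \<in> {G, H}" "w \<in> {1..n}" "c = cr n Gw t w" for G' Gw w
  proof -
    have "closed_val n G' (Sum 1 (cphi n l G H t Gw w)) = (\<Sum>v\<in>{1..n}. sem n G' ((\<lambda>_. 1)(1 := v)) (cphi n l G H t Gw w))"
      unfolding closed_val_def by simp
    also have "\<dots> = (\<Sum>v\<in>{1..n}. of_bool (cr n G' t v = c))"
      by (rule sum.cong[OF refl]) (use sem_cphi[OF G H that(1,2) _ that(3)] that(4) in auto)
    also have "\<dots> = real (count (gcr n G' t) c)" unfolding gcr_def by (rule sum_of_bool_count) simp
    finally show ?thesis .
  qed
  show "count (gcr n G t) c = count (gcr n H t) c"
  proof (cases "\<exists>Gw\<in>{G, H}. \<exists>w\<in>{1..n}. c = cr n Gw t w")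
    case True
    then obtain Gw w where a: "Gw \<in> {G, H}" "w \<in> {1..n}" "c = cr n Gw t w" by blast
    have syn: "Sum 1 (cphi n l G H t Gw w) \<in> TLd \<Omega> l 2 (t + 1)" "free (Sum 1 (cphi n l G H t Gw w)) = {}"
      using syn_cphi[of n l G H t Gw w \<Omega>] by (auto simp: TLd_def TL_def)
    have "real (count (gcr n G t) c) = real (count (gcr n H t) c)"
      using cnt[of G Gw w] cnt[of H Gw w] a TLeq syn by auto
    then show ?thesis by simp
  next
    case False
    then have "c \<notin># gcr n G t" "c \<notin># gcr n H t" unfolding gcr_def by auto
    then show ?thesis by (simp add: not_in_iff)
  qed
qed



definition reps :: "nat \<Rightarrow> nat \<Rightarrow> graph \<Rightarrow> graph \<Rightarrow> (graph \<times> nat list \<times> nat) list" where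
  "reps n k G H = [(Gz, z, u). Gz \<leftarrow> [G, H], z \<leftarrow> List.n_lists k [1..<Suc n], u \<leftarrow> [1..<Suc n]]"

lemma set_reps: "set (reps n k G H) = {G, H} \<times> tuples n k \<times> {1..n}"
  unfolding reps_def tuples_eq by auto

definition emul :: "nat \<Rightarrow> graph \<Rightarrow> nat \<Rightarrow> nat list \<Rightarrow> nat \<Rightarrow> atype \<times> wlcol list" where
  "emul n G t vs u = (atp G (vs @ [u]), map (\<lambda>i. wl n G t (vs[i := u])) [0..<length vs])"

definition Mw :: "nat \<Rightarrow> graph \<Rightarrow> nat \<Rightarrow> nat list \<Rightarrow> (atype \<times> wlcol list) multiset" where
  "Mw n G t vs = image_mset (emul n G t vs) (mset_set {1..n})"

lemma wl_Suc': "wl n G (Suc t) vs = WRef (wl n G t vs) (Mw n G t vs)"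
  unfolding Mw_def emul_def[abs_def] by simp

primrec wphi :: "nat \<Rightarrow> nat \<Rightarrow> nat \<Rightarrow> graph \<Rightarrow> graph \<Rightarrow> nat \<Rightarrow> graph \<Rightarrow> nat list \<Rightarrow> tl" where
  "wphi n l k G H 0 Gw ws = atpind l (CVs n G H) Gw ws"
| "wphi n l k G H (Suc t) Gw ws = Mul (wphi n l k G H t Gw ws)
     (prodL 1 (map (\<lambda>(Gz, z, u). indv 1
        (Sum (Suc k) (Mul (atpind l (CVs n G H) Gz (z @ [u]))
           (prodL 1 (map (\<lambda>i. ren (sw (Suc i) (Suc k)) (wphi n l k G H t Gz (z[i := u]))) [0..<k]))))
        (real (count (Mw n Gw t ws) (emul n Gz t z u))) (Rs n)) (reps n k G H)))"

lemma tuples_update: "vs \<in> tuples n k \<Longrightarrow> u \<in> {1..n} \<Longrightarrow> vs[i := u] \<in> tuples n k"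
  unfolding tuples_def using set_update_subset_insert[of vs i u] by auto

lemma sw_Suc: "j < k \<Longrightarrow> i < k \<Longrightarrow> sw (Suc i) (Suc k) (Suc j) = (if j = i then Suc k else Suc j)"
  by (simp add: sw_def)

lemma sem_wphi:
  assumes G: "G \<in> graphs n l" and H: "H \<in> graphs n l"
  shows "G' \<in> {G, H} \<Longrightarrow> Gw \<in> {G, H} \<Longrightarrow> vs \<in> tuples n k \<Longrightarrow> ws \<in> tuples n k \<Longrightarrow>
    \<forall>i<k. \<nu> (Suc i) = vs ! i \<Longrightarrow>
    sem n G' \<nu> (wphi n l k G H t Gw ws) = of_bool (wl n G' t vs = wl n Gw t ws)"
proof (induction t arbitrary: \<nu> vs Gw ws)
  case 0
  have gr: "G' \<in> graphs n l" "Gw \<in> graphs n l" using 0 G H by auto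
  have len: "length vs = k" "length ws = k" "set vs \<subseteq> {1..n}" using 0(3,4) unfolding tuples_def by auto
  have "\<forall>i<length vs. col G' (vs ! i) \<in> set (CVs n G H)"
    using len(3) col_in_CVs[OF 0(1)] by (auto simp: set_conv_nth)
  then show ?case using sem_atpind[OF gr, of vs ws \<nu> "CVs n G H"] len 0(5) by simp
next
  case (Suc t)
  have gr: "G' \<in> graphs n l" "Gw \<in> graphs n l" using Suc.prems G H by auto
  have len: "length vs = k" "length ws = k" "set vs \<subseteq> {1..n}" using Suc.prems(3,4) unfolding tuples_def by auto
  let ?Mv = "Mw n G' t vs" and ?Mw = "Mw n Gw t ws"
  have feat: "sem n G' \<nu> (Sum (Suc k) (Mul (atpind l (CVs n G H) Gz (z @ [u]))
           (prodL 1 (map (\<lambda>i. ren (sw (Suc i) (Suc k)) (wphi n l k G H t Gz (z[i := u]))) [0..<k]))))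
      = real (count ?Mv (emul n Gz t z u))"
    if r: "Gz \<in> {G, H}" "z \<in> tuples n k" "u \<in> {1..n}" for Gz z u
  proof -
    have grz: "Gz \<in> graphs n l" using r G H by auto
    have lz: "length z = k" using r(2) unfolding tuples_def by auto
    have "sem n G' \<nu> (Sum (Suc k) (Mul (atpind l (CVs n G H) Gz (z @ [u]))
           (prodL 1 (map (\<lambda>i. ren (sw (Suc i) (Suc k)) (wphi n l k G H t Gz (z[i := u]))) [0..<k]))))
      = (\<Sum>u'\<in>{1..n}. of_bool (emul n G' t vs u' = emul n Gz t z u))"
      unfolding sem.simps(9)
    proof (rule sum.cong[OF refl])
      fix u' assume u': "u' \<in> {1..n}"
      let ?\<nu> = "\<nu>(Suc k := u')"
      have nu': "\<forall>i<length (vs @ [u']). ?\<nu> (Suc i) = (vs @ [u']) ! i"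
        using Suc.prems(5) len(1) by (auto simp: nth_append less_Suc_eq)
      have cv: "\<forall>i<length (vs @ [u']). col G' ((vs @ [u']) ! i) \<in> set (CVs n G H)"
        using len(3) u' col_in_CVs[OF Suc.prems(1)] by (auto simp: nth_append set_conv_nth)
      have A: "sem n G' ?\<nu> (atpind l (CVs n G H) Gz (z @ [u])) = of_bool (atp G' (vs @ [u']) = atp Gz (z @ [u]))"
        by (rule sem_atpind[OF gr(1) grz _ nu' cv]) (simp add: len lz)
      have B: "sem n G' ?\<nu> (prodL 1 (map (\<lambda>i. ren (sw (Suc i) (Suc k)) (wphi n l k G H t Gz (z[i := u]))) [0..<k]))
          = of_bool (\<forall>i\<in>set [0..<k]. wl n G' t (vs[i := u']) = wl n Gz t (z[i := u]))"
      proof (rule prodL_bool)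
        fix i assume i: "i \<in> set [0..<k]"
        have nu'': "\<forall>j<k. (?\<nu> \<circ> sw (Suc i) (Suc k)) (Suc j) = (vs[i := u']) ! j"
          using i Suc.prems(5) len(1) by (auto simp: sw_Suc)
        show "sem n G' ?\<nu> (ren (sw (Suc i) (Suc k)) (wphi n l k G H t Gz (z[i := u]))) = of_bool (wl n G' t (vs[i := u']) = wl n Gz t (z[i := u]))"
          unfolding sem_ren[OF inj_sw]
          by (rule Suc.IH[OF Suc.prems(1) r(1) tuples_update[OF Suc.prems(3) u'] tuples_update[OF r(2) r(3)] nu''])
      qed
      have "(atp G' (vs @ [u']) = atp Gz (z @ [u]) \<and> (\<forall>i\<in>set [0..<k]. wl n G' t (vs[i := u']) = wl n Gz t (z[i := u])))
           \<longleftrightarrow> emul n G' t vs u' = emul n Gz t z u"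
        unfolding emul_def using len(1) lz by (auto simp: map_eq_conv)
      then show "sem n G' ?\<nu> (Mul (atpind l (CVs n G H) Gz (z @ [u]))
           (prodL 1 (map (\<lambda>i. ren (sw (Suc i) (Suc k)) (wphi n l k G H t Gz (z[i := u]))) [0..<k])))
          = of_bool (emul n G' t vs u' = emul n Gz t z u)"
        using A B by (simp del: of_bool_eq add: of_bool_mult)
    qed
    also have "\<dots> = real (count ?Mv (emul n Gz t z u))"
      unfolding Mw_def by (rule sum_of_bool_count) simp
    finally show ?thesis .
  qed
  have B: "sem n G' \<nu> (prodL 1 (map (\<lambda>(Gz, z, u). indv 1
        (Sum (Suc k) (Mul (atpind l (CVs n G H) Gz (z @ [u]))
           (prodL 1 (map (\<lambda>i. ren (sw (Suc i) (Suc k)) (wphi n l k G H t Gz (z[i := u]))) [0..<k]))))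
        (real (count ?Mw (emul n Gz t z u))) (Rs n)) (reps n k G H)))
     = of_bool (\<forall>r\<in>set (reps n k G H). (\<lambda>(Gz, z, u). count ?Mv (emul n Gz t z u) = count ?Mw (emul n Gz t z u)) r)"
  proof (rule prodL_bool)
    fix r assume r: "r \<in> set (reps n k G H)"
    obtain Gz z u where rz0: "r = (Gz, z, u)" by (metis prod_cases3)
    then have rz: "Gz \<in> {G, H}" "z \<in> tuples n k" "u \<in> {1..n}" using r unfolding set_reps by auto
    have "count ?Mv (emul n Gz t z u) \<le> card {1..n}"
      unfolding Mw_def by (rule count_image_mset_set_le) simp
    then have inR: "sem n G' \<nu> (Sum (Suc k) (Mul (atpind l (CVs n G H) Gz (z @ [u]))
           (prodL 1 (map (\<lambda>i. ren (sw (Suc i) (Suc k)) (wphi n l k G H t Gz (z[i := u]))) [0..<k])))) \<in> set (Rs n)"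
      unfolding feat[OF rz] using in_Rs by simp
    have "sem n G' \<nu> (indv 1 (Sum (Suc k) (Mul (atpind l (CVs n G H) Gz (z @ [u]))
           (prodL 1 (map (\<lambda>i. ren (sw (Suc i) (Suc k)) (wphi n l k G H t Gz (z[i := u]))) [0..<k]))))
        (real (count ?Mw (emul n Gz t z u))) (Rs n)) = of_bool (real (count ?Mv (emul n Gz t z u)) = real (count ?Mw (emul n Gz t z u)))"
      using sem_indv[OF inR] unfolding feat[OF rz] .
    then show "sem n G' \<nu> ((\<lambda>(Gz, z, u). indv 1
        (Sum (Suc k) (Mul (atpind l (CVs n G H) Gz (z @ [u]))
           (prodL 1 (map (\<lambda>i. ren (sw (Suc i) (Suc k)) (wphi n l k G H t Gz (z[i := u]))) [0..<k]))))
        (real (count ?Mw (emul n Gz t z u))) (Rs n)) r) = of_bool ((\<lambda>(Gz, z, u). count ?Mv (emul n Gz t z u) = count ?Mw (emul n Gz t z u)) r)"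
      unfolding rz0 prod.case of_nat_eq_iff .
  qed
  have eqv: "(\<forall>r\<in>set (reps n k G H). (\<lambda>(Gz, z, u). count ?Mv (emul n Gz t z u) = count ?Mw (emul n Gz t z u)) r) \<longleftrightarrow> ?Mv = ?Mw"
  proof -
    let ?S = "(\<lambda>(Gz, z, u). emul n Gz t z u) ` set (reps n k G H)"
    have "(\<forall>r\<in>set (reps n k G H). (\<lambda>(Gz, z, u). count ?Mv (emul n Gz t z u) = count ?Mw (emul n Gz t z u)) r) \<longleftrightarrow>
          (\<forall>x\<in>?S. count ?Mv x = count ?Mw x)" by auto
    also have "\<dots> \<longleftrightarrow> ?Mv = ?Mw"
    proof (rule mset_eq_on)
      show "\<forall>x\<in>#?Mv. x \<in> ?S" using Suc.prems(1,3) unfolding Mw_def set_reps by (auto simp: image_iff)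
      show "\<forall>x\<in>#?Mw. x \<in> ?S" using Suc.prems(2,4) unfolding Mw_def set_reps by (auto simp: image_iff)
    qed
    finally show ?thesis .
  qed
  show ?case unfolding wl_Suc'
    using Suc.IH[where \<nu>=\<nu>, OF Suc.prems] B eqv by (simp del: of_bool_eq add: of_bool_mult)
qed



lemma sw_img: "i < k \<Longrightarrow> sw (Suc i) (Suc k) ` {1..Suc k} \<subseteq> {1..Suc k}"
  by (auto simp: sw_def)

lemma syn_wphi:
  assumes k: "k \<ge> 1"
  shows "length ws = k \<Longrightarrow> vars (wphi n l k G H t Gw ws) \<subseteq> {1..Suc k} \<and> free (wphi n l k G H t Gw ws) \<subseteq> {1..k}
    \<and> sd (wphi n l k G H t Gw ws) \<le> t \<and> wf \<Omega> l (wphi n l k G H t Gw ws)"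
proof (induction t arbitrary: Gw ws)
  case 0
  have "vars (atpind l (CVs n G H) Gw ws) \<subseteq> {1..Suc k}" using vars_atpind[of l "CVs n G H" Gw ws] 0 k by auto
  moreover have "free (atpind l (CVs n G H) Gw ws) \<subseteq> {1..k}" using free_atpind[of l "CVs n G H" Gw ws] 0 k by auto
  moreover have "sd (atpind l (CVs n G H) Gw ws) \<le> 0" by (rule sd_atpind)
  ultimately show ?case using wf_atpind by simp
next
  case (Suc t)
  let ?F = "\<lambda>(Gz, z, u). indv 1
        (Sum (Suc k) (Mul (atpind l (CVs n G H) Gz (z @ [u]))
           (prodL 1 (map (\<lambda>i. ren (sw (Suc i) (Suc k)) (wphi n l k G H t Gz (z[i := u]))) [0..<k]))))
        (real (count (Mw n Gw t ws) (emul n Gz t z u))) (Rs n)"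
  have F: "\<forall>e\<in>set (map ?F (reps n k G H)). vars e \<subseteq> {1..Suc k} \<and> free e \<subseteq> {1..k} \<and> sd e \<le> Suc t \<and> wf \<Omega> l e"
  proof
    fix e assume "e \<in> set (map ?F (reps n k G H))"
    then obtain Gz z u where r: "(Gz, z, u) \<in> set (reps n k G H)" and e: "e = ?F (Gz, z, u)" by auto
    have lz: "length z = k" using r unfolding set_reps tuples_def by auto
    let ?P = "prodL 1 (map (\<lambda>i. ren (sw (Suc i) (Suc k)) (wphi n l k G H t Gz (z[i := u]))) [0..<k])"
    let ?A = "atpind l (CVs n G H) Gz (z @ [u])"
    have R: "vars (ren (sw (Suc i) (Suc k)) (wphi n l k G H t Gz (z[i := u]))) \<subseteq> {1..Suc k}
        \<and> free (ren (sw (Suc i) (Suc k)) (wphi n l k G H t Gz (z[i := u]))) \<subseteq> {1..Suc k}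
        \<and> sd (ren (sw (Suc i) (Suc k)) (wphi n l k G H t Gz (z[i := u]))) \<le> t
        \<and> wf \<Omega> l (ren (sw (Suc i) (Suc k)) (wphi n l k G H t Gz (z[i := u])))" if i: "i < k" for i
    proof -
      have IH: "vars (wphi n l k G H t Gz (z[i := u])) \<subseteq> {1..Suc k}" "free (wphi n l k G H t Gz (z[i := u])) \<subseteq> {1..k}"
        "sd (wphi n l k G H t Gz (z[i := u])) \<le> t" "wf \<Omega> l (wphi n l k G H t Gz (z[i := u]))"
        using Suc.IH[of "z[i := u]" Gz] lz by auto
      have "vars (ren (sw (Suc i) (Suc k)) (wphi n l k G H t Gz (z[i := u]))) \<subseteq> {1..Suc k}"
        unfolding vars_ren using IH(1) sw_img[OF i] by blast
      moreover have "free (ren (sw (Suc i) (Suc k)) (wphi n l k G H t Gz (z[i := u]))) \<subseteq> {1..Suc k}"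
        unfolding free_ren[OF inj_sw] using IH(2) sw_img[OF i] by force
      ultimately show ?thesis using IH(3,4) by (simp add: sd_ren wf_ren)
    qed
    have PV: "vars ?P \<subseteq> {1..Suc k}" by (rule vars_prodL) (use R in auto)
    have PF: "free ?P \<subseteq> {1..Suc k}" by (rule free_prodL) (use R in auto)
    have PS: "sd ?P \<le> t" by (rule sd_prodL) (use R in auto)
    have PW: "wf \<Omega> l ?P" by (rule wf_prodL) (use R in auto)
    have AV: "vars ?A \<subseteq> {1..Suc k}" using vars_atpind[of l "CVs n G H" Gz "z @ [u]"] lz by simp
    have AF: "free ?A \<subseteq> {1..Suc k}" using free_atpind[of l "CVs n G H" Gz "z @ [u]"] lz by simp
    have AS: "sd ?A \<le> t" by (rule sd_atpind)
    have SV: "vars (Sum (Suc k) (Mul ?A ?P)) \<subseteq> {1..Suc k}" using AV PV by simp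
    have SF: "free (Sum (Suc k) (Mul ?A ?P)) \<subseteq> {1..k}" using AF PF by auto
    have SS: "sd (Sum (Suc k) (Mul ?A ?P)) \<le> Suc t" using AS PS by simp
    have SW: "wf \<Omega> l (Sum (Suc k) (Mul ?A ?P))" using PW wf_atpind by simp
    have "vars e \<subseteq> {1..Suc k}" unfolding e prod.case by (rule vars_indv[OF SV]) simp
    moreover have "free e \<subseteq> {1..k}" unfolding e prod.case by (rule free_indv[OF SF]) (use k in simp)
    moreover have "sd e \<le> Suc t" unfolding e prod.case by (rule sd_indv[OF SS])
    moreover have "wf \<Omega> l e" unfolding e prod.case by (rule wf_indv[OF SW])
    ultimately show "vars e \<subseteq> {1..Suc k} \<and> free e \<subseteq> {1..k} \<and> sd e \<le> Suc t \<and> wf \<Omega> l e" by blast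
  qed
  have W: "vars (wphi n l k G H t Gw ws) \<subseteq> {1..Suc k}" "free (wphi n l k G H t Gw ws) \<subseteq> {1..k}"
      "sd (wphi n l k G H t Gw ws) \<le> Suc t" "wf \<Omega> l (wphi n l k G H t Gw ws)" using Suc.IH[of ws Gw] Suc.prems by auto
  moreover have "vars (prodL 1 (map ?F (reps n k G H))) \<subseteq> {1..Suc k}" by (rule vars_prodL) (use F in auto)
  moreover have "free (prodL 1 (map ?F (reps n k G H))) \<subseteq> {1..k}" by (rule free_prodL) (use F k in auto)
  moreover have "sd (prodL 1 (map ?F (reps n k G H))) \<le> Suc t" by (rule sd_prodL) (use F in auto)
  moreover have "wf \<Omega> l (prodL 1 (map ?F (reps n k G H)))" by (rule wf_prodL) (use F in auto)
  ultimately show ?case by simp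
qed

fun nsums :: "nat list \<Rightarrow> tl \<Rightarrow> tl" where
  "nsums [] \<phi> = \<phi>"
| "nsums (x # xs) \<phi> = Sum x (nsums xs \<phi>)"

fun upds :: "(nat \<Rightarrow> nat) \<Rightarrow> nat list \<Rightarrow> nat list \<Rightarrow> nat \<Rightarrow> nat" where
  "upds \<nu> (x # xs) (u # us) = upds (\<nu>(x := u)) xs us"
| "upds \<nu> _ _ = \<nu>"

lemma tuples_0: "tuples n 0 = {[]}"
  unfolding tuples_def by auto

lemma tuples_Suc: "tuples n (Suc m) = (\<lambda>(u, us). u # us) ` ({1..n} \<times> tuples n m)"
proof
  show "tuples n (Suc m) \<subseteq> (\<lambda>(u, us). u # us) ` ({1..n} \<times> tuples n m)"
  proof
    fix zs assume "zs \<in> tuples n (Suc m)"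
    then obtain u us where "zs = u # us" "length us = m" "u \<in> {1..n}" "set us \<subseteq> {1..n}"
      unfolding tuples_def by (cases zs) auto
    then show "zs \<in> (\<lambda>(u, us). u # us) ` ({1..n} \<times> tuples n m)" unfolding tuples_def by force
  qed
  show "(\<lambda>(u, us). u # us) ` ({1..n} \<times> tuples n m) \<subseteq> tuples n (Suc m)"
    unfolding tuples_def by auto
qed

lemma sem_sums: "sem n G \<nu> (nsums xs \<phi>) = (\<Sum>us\<in>tuples n (length xs). sem n G (upds \<nu> xs us) \<phi>)"
proof (induction xs arbitrary: \<nu>)
  case Nil
  then show ?case by (simp add: tuples_0)
next
  case (Cons x xs)
  have inj: "inj_on (\<lambda>(u, us). u # us) ({1..n} \<times> tuples n (length xs))"
    by (auto simp: inj_on_def)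
  have "sem n G \<nu> (nsums (x # xs) \<phi>) = (\<Sum>u\<in>{1..n}. \<Sum>us\<in>tuples n (length xs). sem n G (upds (\<nu>(x := u)) xs us) \<phi>)"
    using Cons.IH by (simp add: fun_upd_def)
  also have "\<dots> = (\<Sum>(u, us)\<in>{1..n} \<times> tuples n (length xs). sem n G (upds \<nu> (x # xs) (u # us)) \<phi>)"
    by (subst sum.cartesian_product) simp
  also have "\<dots> = (\<Sum>zs\<in>(\<lambda>(u, us). u # us) ` ({1..n} \<times> tuples n (length xs)). sem n G (upds \<nu> (x # xs) zs) \<phi>)"
    by (subst sum.reindex[OF inj]) (simp add: case_prod_beta comp_def)
  also have "\<dots> = (\<Sum>zs\<in>tuples n (length (x # xs)). sem n G (upds \<nu> (x # xs) zs) \<phi>)"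
    by (simp add: tuples_Suc)
  finally show ?case .
qed

lemma upds_notin: "x \<notin> set xs \<Longrightarrow> upds \<nu> xs us x = \<nu> x"
  by (induction \<nu> xs us rule: upds.induct) auto

lemma upds_nth: "distinct xs \<Longrightarrow> length us = length xs \<Longrightarrow> i < length xs \<Longrightarrow> upds \<nu> xs us (xs ! i) = us ! i"
proof (induction \<nu> xs us arbitrary: i rule: upds.induct)
  case (1 \<nu> x xs u us)
  then show ?case by (cases i) (auto simp: upds_notin fun_upd_def)
qed auto

lemma closed_sums_count:
  assumes "\<And>\<nu> vs. vs \<in> tuples n k \<Longrightarrow> \<forall>i<k. \<nu> (Suc i) = vs ! i \<Longrightarrow> sem n G \<nu> \<phi> = of_bool (f vs = c)"
  shows "closed_val n G (nsums [1..<Suc k] \<phi>) = real (count (image_mset f (mset_set (tuples n k))) c)"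
proof -
  have "closed_val n G (nsums [1..<Suc k] \<phi>) = (\<Sum>vs\<in>tuples n k. sem n G (upds (\<lambda>_. 1) [1..<Suc k] vs) \<phi>)"
    unfolding closed_val_def sem_sums by simp
  also have "\<dots> = (\<Sum>vs\<in>tuples n k. of_bool (f vs = c))"
  proof (rule sum.cong[OF refl])
    fix vs assume vs: "vs \<in> tuples n k"
    have "\<forall>i<k. upds (\<lambda>_. 1) [1..<Suc k] vs (Suc i) = vs ! i"
      using upds_nth[of "[1..<Suc k]" vs i "\<lambda>_. 1" for i] vs unfolding tuples_def by auto
    then show "sem n G (upds (\<lambda>_. 1) [1..<Suc k] vs) \<phi> = of_bool (f vs = c)" by (rule assms[OF vs])
  qed
  also have "\<dots> = real (count (image_mset f (mset_set (tuples n k))) c)"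
    by (rule sum_of_bool_count[OF finite_tuples])
  finally show ?thesis .
qed

lemma free_sums: "free (nsums xs \<phi>) = free \<phi> - set xs"
  by (induction xs) auto
lemma vars_sums: "vars (nsums xs \<phi>) = vars \<phi> \<union> set xs"
  by (induction xs) auto
lemma sd_sums: "sd (nsums xs \<phi>) = length xs + sd \<phi>"
  by (induction xs) auto
lemma wf_sums: "wf \<Omega> l (nsums xs \<phi>) = wf \<Omega> l \<phi>"
  by (induction xs) auto

lemma dir_TL_gwl:
  assumes G: "G \<in> graphs n l" and H: "H \<in> graphs n l" and k: "k \<ge> 1"
    and TLeq: "\<forall>\<phi>\<in>L. free \<phi> = {} \<longrightarrow> closed_val n G \<phi> = closed_val n H \<phi>"
    and inL: "\<And>Gw ws. Gw \<in> {G, H} \<Longrightarrow> ws \<in> tuples n k \<Longrightarrow> nsums [1..<Suc k] (wphi n l k G H t Gw ws) \<in> L"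
  shows "gwl n G k t = gwl n H k t"
proof (rule multiset_eqI)
  fix c
  have cnt: "closed_val n G' (nsums [1..<Suc k] (wphi n l k G H t Gw ws)) = real (count (gwl n G' k t) c)"
    if "G' \<in> {G, H}" "Gw \<in> {G, H}" "ws \<in> tuples n k" "c = wl n Gw t ws" for G' Gw ws
    unfolding gwl_def
    by (rule closed_sums_count) (use sem_wphi[OF G H that(1,2) _ that(3)] that(4) in auto)
  show "count (gwl n G k t) c = count (gwl n H k t) c"
  proof (cases "\<exists>Gw\<in>{G, H}. \<exists>ws\<in>tuples n k. c = wl n Gw t ws")
    case True
    then obtain Gw ws where a: "Gw \<in> {G, H}" "ws \<in> tuples n k" "c = wl n Gw t ws" by blast
    have "length ws = k" using a(2) unfolding tuples_def by simp
    then have "free (wphi n l k G H t Gw ws) \<subseteq> {1..k}" using syn_wphi[OF k] by blast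
    then have fr: "free (nsums [1..<Suc k] (wphi n l k G H t Gw ws)) = {}" by (auto simp: free_sums)
    have "real (count (gwl n G k t) c) = real (count (gwl n H k t) c)"
      using cnt[of G Gw ws] cnt[of H Gw ws] a TLeq inL[OF a(1,2)] fr by auto
    then show ?thesis by simp
  next
    case False
    then have "c \<notin># gwl n G k t" "c \<notin># gwl n H k t" unfolding gwl_def using finite_tuples by auto
    then show ?thesis by (simp add: not_in_iff)
  qed
qed

lemma wphi_TL:
  assumes k: "k \<ge> 1" and ws: "ws \<in> tuples n k"
  shows "nsums [1..<Suc k] (wphi n l k G H t Gw ws) \<in> TL \<Omega> l (k + 1)"
proof -
  have "length ws = k" using ws unfolding tuples_def by simp
  then have S: "vars (wphi n l k G H t Gw ws) \<subseteq> {1..Suc k}" "wf \<Omega> l (wphi n l k G H t Gw ws)"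
    using syn_wphi[OF k] by blast+
  then show ?thesis unfolding TL_def by (auto simp: vars_sums wf_sums)
qed

lemma wphi_TLd1:
  assumes ws: "ws \<in> tuples n 1"
  shows "nsums [1..<Suc 1] (wphi n l 1 G H t Gw ws) \<in> TLd \<Omega> l 2 (t + 1)"
proof -
  have "length ws = 1" using ws unfolding tuples_def by simp
  then have S: "vars (wphi n l 1 G H t Gw ws) \<subseteq> {1..Suc 1}" "wf \<Omega> l (wphi n l 1 G H t Gw ws)"
      "sd (wphi n l 1 G H t Gw ws) \<le> t"
    using syn_wphi[of 1] by blast+
  then show ?thesis unfolding TLd_def TL_def by (auto simp: vars_sums wf_sums sd_sums upt_rec)
qed



theorem theorem4:
  fixes n l :: nat and \<Omega> :: "fsym set"
  assumes "n \<ge> 1" and "l \<ge> 1"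
    and "\<forall>f\<in>\<Omega>. fst f \<ge> 1"
  shows "\<forall>t k. k \<ge> 1 \<longrightarrow>
           rho0_gcr n l t = rho0_TL n l (TLd \<Omega> l 2 (t + 1)) \<and>
           rho0_TL n l (TLd \<Omega> l 2 (t + 1)) = rho0_gwl n l 1 t \<and>
           rho0_gwl_inf n l k = rho0_TL n l (TL \<Omega> l (k + 1))"
proof (intro allI impI conjI)
  fix t k :: nat
  assume k: "k \<ge> 1"
  have TLd2: "vars \<phi> \<subseteq> {1..2} \<and> sd \<phi> \<le> t + 1" if "\<phi> \<in> TLd \<Omega> l 2 (t + 1)" for \<phi>
    using that unfolding TLd_def TL_def by auto
  show "rho0_gcr n l t = rho0_TL n l (TLd \<Omega> l 2 (t + 1))"
  proof (intro set_eqI iffI)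
    fix p assume "p \<in> rho0_gcr n l t"
    then obtain G H where p: "p = (G, H)" "G \<in> graphs n l" "H \<in> graphs n l" "gcr n G t = gcr n H t"
      unfolding rho0_gcr_def by auto
    show "p \<in> rho0_TL n l (TLd \<Omega> l 2 (t + 1))"
      unfolding rho0_TL_def p(1) using p(2,3) dir_gcr_TL[OF p(2,3,4)] TLd2 by auto
  next
    fix p assume "p \<in> rho0_TL n l (TLd \<Omega> l 2 (t + 1))"
    then obtain G H where p: "p = (G, H)" "G \<in> graphs n l" "H \<in> graphs n l"
      "\<forall>\<phi>\<in>TLd \<Omega> l 2 (t + 1). free \<phi> = {} \<longrightarrow> closed_val n G \<phi> = closed_val n H \<phi>"
      unfolding rho0_TL_def by auto
    show "p \<in> rho0_gcr n l t"
      unfolding rho0_gcr_def p(1) using p(2,3) dir_TL_gcr[OF p(2,3,4)] by auto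
  qed
  show "rho0_TL n l (TLd \<Omega> l 2 (t + 1)) = rho0_gwl n l 1 t"
  proof (intro set_eqI iffI)
    fix p assume "p \<in> rho0_TL n l (TLd \<Omega> l 2 (t + 1))"
    then obtain G H where p: "p = (G, H)" "G \<in> graphs n l" "H \<in> graphs n l"
      "\<forall>\<phi>\<in>TLd \<Omega> l 2 (t + 1). free \<phi> = {} \<longrightarrow> closed_val n G \<phi> = closed_val n H \<phi>"
      unfolding rho0_TL_def by auto
    have "gwl n G 1 t = gwl n H 1 t"
      by (rule dir_TL_gwl[OF p(2,3) _ p(4)]) (use wphi_TLd1 in auto)
    then show "p \<in> rho0_gwl n l 1 t"
      unfolding rho0_gwl_def p(1) using p(2,3) by auto
  next
    fix p assume "p \<in> rho0_gwl n l 1 t"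
    then obtain G H where p: "p = (G, H)" "G \<in> graphs n l" "H \<in> graphs n l" "gwl n G 1 t = gwl n H 1 t"
      unfolding rho0_gwl_def by auto
    show "p \<in> rho0_TL n l (TLd \<Omega> l 2 (t + 1))"
      unfolding rho0_TL_def p(1) using p(2,3) dir_gwl1_TL[OF p(2,3,4)] TLd2 by auto
  qed
  show "rho0_gwl_inf n l k = rho0_TL n l (TL \<Omega> l (k + 1))"
  proof (intro set_eqI iffI)
    fix p assume "p \<in> rho0_gwl_inf n l k"
    moreover obtain G H where p1: "p = (G, H)" by (metis surj_pair)
    ultimately have p: "p = (G, H)" "G \<in> graphs n l" "H \<in> graphs n l" "\<forall>t. gwl n G k t = gwl n H k t"
      unfolding rho0_gwl_inf_def rho0_gwl_def by auto
    have "closed_val n G \<phi> = closed_val n H \<phi>" if "\<phi> \<in> TL \<Omega> l (k + 1)" "free \<phi> = {}" for \<phi>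
      by (rule dir_gwl_TL[OF p(2,3) assms(1) p(4)[rule_format]]) (use that in \<open>auto simp: TL_def\<close>)
    then show "p \<in> rho0_TL n l (TL \<Omega> l (k + 1))"
      unfolding rho0_TL_def p(1) using p(2,3) by auto
  next
    fix p assume "p \<in> rho0_TL n l (TL \<Omega> l (k + 1))"
    then obtain G H where p: "p = (G, H)" "G \<in> graphs n l" "H \<in> graphs n l"
      "\<forall>\<phi>\<in>TL \<Omega> l (k + 1). free \<phi> = {} \<longrightarrow> closed_val n G \<phi> = closed_val n H \<phi>"
      unfolding rho0_TL_def by auto
    have "gwl n G k t' = gwl n H k t'" for t'
      by (rule dir_TL_gwl[OF p(2,3) k p(4)]) (use wphi_TL[OF k] in auto)
    then show "p \<in> rho0_gwl_inf n l k"
      unfolding rho0_gwl_inf_def rho0_gwl_def p(1) using p(2,3) by auto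
  qed
qed


end
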